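(* Let $p$ be an odd prime and $n\ge4$ an integer with base-$p$ expansion $n=n_0+n_1p+\cdots+n_kp^k$, $n_j\in\{0,\ldots,p-1\}$, $n_k>0$. Then: (1) if it is not the case that $n_0=\cdots=n_{k-1}=p-1$, then $c^D_{p,i}(n)=c^D_{p,-i}(n)$ for all $i\in\mathbb{Z}_p$; (2) for each $i\in\mathbb{Z}_p$, with $N:=\prod_{j=0}^k(n_j+1)$, $c^D_{p,i}(n)$ is divisible by $2^{n+2-N}$ if ($n_0>0$ and $i=0$) or $n_0=\cdots=n_{k-1}=p-1$; by $2^{n-N}$ if $n_0=0$ and $i\ne0$; and by $2^{n+1-N}$ otherwise.
   Context: A signed permutation of $[n]$ is a bijection $w$ of $\{\pm1,\ldots,\pm n\}$ with $w(-i)=-w(i)$; it is even if an even number of $w(1),\ldots,w(n)$ are negative; these form $\mathfrak{S}^D_n$. With $w(0):=-w(2)$, $D(w)=\{i\in\{0,\ldots,n-1\}: w(i)>w(i+1)\}$. A pseudo-composition of $n$ ($\alpha\models_0 n$) is a sequence $(\alpha_1,\ldots,\alpha_\ell)$ of integers with $\alpha_1\ge0$, $\alpha_2,\ldots,\alpha_\ell>0$ and sum $n$, with $D(\alpha)=\{\alpha_1,\alpha_1+\alpha_2,\ldots,\alpha_1+\cdots+\alpha_{\ell-1}\}$. Then $r^D_\alpha=|\{w\in\mathfrak{S}^D_n: D(w)=D(\alpha)\}|$ and $c^D_{p,i}(n)=|\{\alpha\models_0 n: r^D_\alpha\equiv i\pmod p\}|$. *)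

theory Defs
  imports Main "HOL-Number_Theory.Cong"
begin

definition signed_set :: "nat \<Rightarrow> int set" where
  "signed_set n = {i. 1 \<le> \<bar>i\<bar> \<and> \<bar>i\<bar> \<le> int n}"

text \<open>Signed permutations of [n], represented as functions on int that are
  bijections of the signed alphabet with w(-i) = -w(i), and the identity elsewhere
  (the last condition only serves to make the representation unique).\<close>
definition signed_perms :: "nat \<Rightarrow> (int \<Rightarrow> int) set" where
  "signed_perms n = {w. bij_betw w (signed_set n) (signed_set n)
      \<and> (\<forall>i\<in>signed_set n. w (- i) = - w i)
      \<and> (\<forall>i. i \<notin> signed_set n \<longrightarrow> w i = i)}"

definition even_signed_perms :: "nat \<Rightarrow> (int \<Rightarrow> int) set" where
  "even_signed_perms n = {w \<in> signed_perms n. even (card {i \<in> {1..int n}. w i < 0})}"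

definition wD :: "(int \<Rightarrow> int) \<Rightarrow> nat \<Rightarrow> int" where
  "wD w i = (if i = 0 then - w 2 else w (int i))"

definition descD :: "nat \<Rightarrow> (int \<Rightarrow> int) \<Rightarrow> nat set" where
  "descD n w = {i \<in> {0..<n}. wD w i > wD w (i + 1)}"

definition pseudo_comp :: "nat \<Rightarrow> nat list \<Rightarrow> bool" where
  "pseudo_comp n \<alpha> \<longleftrightarrow> \<alpha> \<noteq> [] \<and> (\<forall>j\<in>{1..<length \<alpha>}. \<alpha> ! j > 0) \<and> sum_list \<alpha> = n"

definition desc_comp :: "nat list \<Rightarrow> nat set" where
  "desc_comp \<alpha> = {sum_list (take j \<alpha>) | j. 1 \<le> j \<and> j \<le> length \<alpha> - 1}"

definition rD :: "nat \<Rightarrow> nat list \<Rightarrow> nat" where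
  "rD n \<alpha> = card {w \<in> even_signed_perms n. descD n w = desc_comp \<alpha>}"

text \<open>c^D_{p,i}(n): residues i taken in Z_p, represented by integers modulo p.\<close>
definition cD :: "nat \<Rightarrow> int \<Rightarrow> nat \<Rightarrow> nat" where
  "cD p i n = card {\<alpha>. pseudo_comp n \<alpha> \<and> [int (rD n \<alpha>) = i] (mod int p)}"

end

theory Submission
  imports Defs "HOL-Computational_Algebra.Primes" "HOL-Library.FuncSet" "HOL-Library.Infinite_Set"
begin

lemma choose_p_cong:
  assumes "prime p" "k \<le> p"
  shows "[p choose k = (if k = 0 \<or> k = p then 1 else 0)] (mod p)"
proof (cases "k = 0 \<or> k = p")
  case True then show ?thesis by auto
next
  case False
  have "k < p" "k \<noteq> 0" "p \<noteq> 0" using False assms prime_gt_0_nat[OF assms(1)] by auto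
  then have "p dvd (p choose k)" using assms(1) dvd_choose_prime[of k p] by blast
  then show ?thesis using False by (simp add: cong_0_iff)
qed

lemma lucas_mult:
  assumes "prime p"
  shows "[(p*q) choose j = (if p dvd j then q choose (j div p) else 0)] (mod p)"
proof (induction q arbitrary: j)
  case 0
  have p0: "p > 0" using assms prime_gt_0_nat by auto
  show ?case
  proof (cases "j = 0")
    case False
    have jd: "p dvd j \<Longrightarrow> j div p > 0" using False p0 by (auto elim!: dvdE)
    have l: "(p * 0) choose j = 0" using False by simp
    have r: "(if p dvd j then 0 choose (j div p) else 0) = (0::nat)"
      using jd by (cases "p dvd j") simp_all
    show ?thesis unfolding l r by (rule cong_refl)
  qed simp
next
  case (Suc q)
  have p0: "p > 0" using assms prime_gt_0_nat by auto
  have "(p * Suc q) choose j = (\<Sum>k\<le>j. ((p*q) choose k) * (p choose (j - k)))"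
    using vandermonde[of "p*q" p j] by (simp add: algebra_simps)
  also have "[\<dots> = (\<Sum>k\<le>j. ((p*q) choose k) * (if k = j \<or> k + p = j then 1 else 0))] (mod p)"
  proof (rule cong_sum)
    fix k assume k: "k \<in> {..j}"
    show "[((p*q) choose k) * (p choose (j - k)) = ((p*q) choose k) * (if k = j \<or> k + p = j then 1 else 0)] (mod p)"
    proof (cases "j - k \<le> p")
      case True
      have "[p choose (j - k) = (if j - k = 0 \<or> j - k = p then 1 else 0)] (mod p)"
        using choose_p_cong[OF assms True] .
      moreover have "(j - k = 0 \<or> j - k = p) = (k = j \<or> k + p = j)" using k by auto
      ultimately have "[p choose (j - k) = (if k = j \<or> k + p = j then 1 else 0)] (mod p)" by simp
      then show ?thesis by (rule cong_scalar_left)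
    next
      case False
      then have "p choose (j - k) = 0" by (intro binomial_eq_0) simp
      have c: "\<not> (k = j \<or> k + p = j)" using False k by auto
      show ?thesis unfolding \<open>p choose (j - k) = 0\<close> using c by simp
    qed
  qed
  also have "(\<Sum>k\<le>j. ((p*q) choose k) * (if k = j \<or> k + p = j then 1 else 0))
      = ((p*q) choose j) + (if p \<le> j then (p*q) choose (j - p) else 0)"
  proof -
    have "(\<Sum>k\<le>j. ((p*q) choose k) * (if k = j \<or> k + p = j then 1 else 0))
        = (\<Sum>k\<in>{k. k \<le> j \<and> (k = j \<or> k + p = j)}. (p*q) choose k)"
      by (rule sum.mono_neutral_cong_right) auto
    also have "{k. k \<le> j \<and> (k = j \<or> k + p = j)} = (if p \<le> j then {j, j - p} else {j})"
      using p0 by auto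
    finally show ?thesis using p0 by auto
  qed
  also have "[\<dots> = (if p dvd j then q choose (j div p) else 0)
       + (if p \<le> j then (if p dvd (j - p) then q choose ((j - p) div p) else 0) else 0)] (mod p)"
    using Suc.IH by (intro cong_add) auto
  also have "(if p dvd j then q choose (j div p) else 0)
       + (if p \<le> j then (if p dvd (j - p) then q choose ((j - p) div p) else 0) else 0)
      = (if p dvd j then Suc q choose (j div p) else 0)"
  proof (cases "p dvd j")
    case True
    then obtain t where t: "j = p * t" by auto
    show ?thesis
    proof (cases "t = 0")
      case True then show ?thesis using t p0 by auto
    next
      case False
      then obtain s where s: "t = Suc s" using not0_implies_Suc by blast
      have "j - p = p * s" using t s by (simp add: algebra_simps)
      then show ?thesis using t s p0 by auto
    qed
  next
    case False
    have "\<not> p dvd (j - p)" if "p \<le> j"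
    proof
      assume "p dvd (j - p)"
      then have "p dvd (j - p + p)" by simp
      then show False using False that by simp
    qed
    then show ?thesis using False by auto
  qed
  finally show ?case .
qed

lemma lucas:
  assumes "prime p" "r < p"
  shows "[(p*q + r) choose x = (q choose (x div p)) * (r choose (x mod p))] (mod p)"
proof -
  have p0: "p > 0" using assms prime_gt_0_nat by auto
  have "(p*q + r) choose x = (\<Sum>k\<le>x. ((p*q) choose k) * (r choose (x - k)))"
    using vandermonde[of "p*q" r x] by simp
  also have "[\<dots> = (\<Sum>k\<le>x. (if p dvd k then q choose (k div p) else 0) * (r choose (x - k)))] (mod p)"
    using lucas_mult[OF assms(1)] by (intro cong_sum cong_mult) auto
  also have "(\<Sum>k\<le>x. (if p dvd k then q choose (k div p) else 0) * (r choose (x - k)))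
      = (\<Sum>k\<in>{p * (x div p)}. (if p dvd k then q choose (k div p) else 0) * (r choose (x - k)))"
  proof (rule sum.mono_neutral_right)
    show "{p * (x div p)} \<subseteq> {..x}" by (simp add: mult_div_mod_eq[of p x] add_increasing2) 
    show "\<forall>k\<in>{..x} - {p * (x div p)}. (if p dvd k then q choose (k div p) else 0) * (r choose (x - k)) = 0"
    proof
      fix k assume k: "k \<in> {..x} - {p * (x div p)}"
      show "(if p dvd k then q choose (k div p) else 0) * (r choose (x - k)) = 0"
      proof (cases "p dvd k")
        case True
        then obtain t where t: "k = p * t" by auto
        have "t \<noteq> x div p" using k t by auto
        moreover have "t \<le> x div p"
        proof -
          have "p * t \<le> x" using k t by auto
          then have "(p * t) div p \<le> x div p" by (rule div_le_mono)
          then show ?thesis using p0 by simp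
        qed
        ultimately have "t < x div p" by auto
        then have "Suc t \<le> x div p" by simp
        then have "p * Suc t \<le> p * (x div p)" by (rule mult_le_mono2)
        then have "p * t + p \<le> p * (x div p)" by simp
        then have "x - k \<ge> p" using t mult_div_mod_eq[of p x] by linarith
        then have "r choose (x - k) = 0" using assms(2) by auto
        then show ?thesis by simp
      qed simp
    qed
  qed simp
  also have "\<dots> = (q choose (x div p)) * (r choose (x mod p))"
    using p0 by (simp add: minus_div_mult_eq_mod[of x p, symmetric] mult.commute)
  finally show ?thesis .
qed

lemma lucas_digit:
  assumes "prime p" "n mod p < x mod p"
  shows "p dvd (n choose x)"
proof -
  have "[n choose x = ((n div p) choose (x div p)) * ((n mod p) choose (x mod p))] (mod p)"
    using lucas[OF assms(1), of "n mod p" "n div p" x] assms prime_gt_0_nat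
    by (simp add: mult_div_mod_eq)
  moreover have "(n mod p) choose (x mod p) = 0" using assms(2) by simp
  ultimately show ?thesis by (simp add: cong_0_iff)
qed

lemma lucas_high:
  assumes "prime p" "p dvd ((n div p) choose (x div p))"
  shows "p dvd (n choose x)"
proof -
  have "[n choose x = ((n div p) choose (x div p)) * ((n mod p) choose (x mod p))] (mod p)"
    using lucas[OF assms(1), of "n mod p" "n div p" x] assms prime_gt_0_nat
    by (simp add: mult_div_mod_eq)
  then show ?thesis using assms(2) by (simp add: cong_0_iff cong_dvd_iff)
qed

lemma digits_split:
  fixes p :: nat
  assumes "p > 0"
  shows "(\<Sum>j\<le>Suc K. d j * p ^ j) = d 0 + p * (\<Sum>j\<le>K. d (Suc j) * p ^ j)"
  by (simp add: sum.atMost_Suc_shift sum_distrib_left algebra_simps del: sum.atMost_Suc)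

lemma digits_mod:
  fixes p :: nat
  assumes "p > 0" "d 0 < p"
  shows "(\<Sum>j\<le>k. d j * p ^ j) mod p = d 0"
proof (cases k)
  case 0 then show ?thesis using assms by simp
next
  case (Suc K)
  then show ?thesis using digits_split[OF assms(1), of d K] assms by simp
qed

lemma digits_div:
  fixes p :: nat
  assumes "p > 0" "d 0 < p"
  shows "(\<Sum>j\<le>Suc K. d j * p ^ j) div p = (\<Sum>j\<le>K. d (Suc j) * p ^ j)"
  using digits_split[OF assms(1), of d K] assms by simp

definition Lset :: "nat \<Rightarrow> nat \<Rightarrow> nat set" where
  "Lset p m = {x. x \<le> m \<and> \<not> p dvd (m choose x)}"

lemma Lset_bound:
  fixes p :: nat
  assumes "prime p" "\<And>j. j \<le> k \<Longrightarrow> d j < p"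
  shows "card (Lset p (\<Sum>j\<le>k. d j * p ^ j)) \<le> (\<Prod>j\<le>k. d j + 1)"
  using assms(2)
proof (induction k arbitrary: d)
  case 0
  have "Lset p (d 0) \<subseteq> {0..d 0}" by (auto simp: Lset_def)
  then have "card (Lset p (d 0)) \<le> card {0..d 0}" by (intro card_mono) auto
  then show ?case by simp
next
  case (Suc K)
  have p0: "p > 0" using assms(1) prime_gt_0_nat by auto
  define n where "n = (\<Sum>j\<le>Suc K. d j * p ^ j)"
  define n' where "n' = (\<Sum>j\<le>K. d (Suc j) * p ^ j)"
  have d0: "d 0 < p" using Suc.prems by auto
  have nmod: "n mod p = d 0" unfolding n_def using digits_mod[where d=d and p=p and k="Suc K"] p0 d0 by simp
  have ndiv: "n div p = n'" unfolding n_def n'_def using digits_div[where d=d and p=p and K=K] p0 d0 by simp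
  have IH: "card (Lset p n') \<le> (\<Prod>j\<le>K. d (Suc j) + 1)"
    unfolding n'_def using Suc.IH[of "\<lambda>j. d (Suc j)"] Suc.prems by auto
  have sub: "(\<lambda>x. (x mod p, x div p)) ` Lset p n \<subseteq> {0..d 0} \<times> Lset p n'"
  proof
    fix y assume "y \<in> (\<lambda>x. (x mod p, x div p)) ` Lset p n"
    then obtain x where x: "x \<in> Lset p n" and y: "y = (x mod p, x div p)" by auto
    have nd: "\<not> p dvd (n choose x)" using x by (auto simp: Lset_def)
    have "x mod p \<le> d 0" using lucas_digit[OF assms(1), of n x] nd nmod by force
    moreover have "\<not> p dvd (n' choose (x div p))" using lucas_high[OF assms(1), of n x] nd ndiv by auto
    moreover then have "x div p \<le> n'"
    proof -
      assume a: "\<not> p dvd (n' choose (x div p))"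
      show ?thesis
      proof (rule ccontr)
        assume "\<not> x div p \<le> n'"
        then have "n' choose (x div p) = 0" by (intro binomial_eq_0) simp
        then show False using a by (metis dvd_0_right)
      qed
    qed
    ultimately show "y \<in> {0..d 0} \<times> Lset p n'" using y by (auto simp: Lset_def)
  qed
  have inj: "inj_on (\<lambda>x. (x mod p, x div p)) (Lset p n)"
    by (intro inj_onI) (metis div_mult_mod_eq prod.inject)
  have fin: "finite (Lset p n')" unfolding Lset_def by auto
  have "card (Lset p n) = card ((\<lambda>x. (x mod p, x div p)) ` Lset p n)"
    using card_image[OF inj] by simp
  also have "\<dots> \<le> card ({0..d 0} \<times> Lset p n')"
    using sub fin by (intro card_mono) auto
  also have "\<dots> = (d 0 + 1) * card (Lset p n')" by (simp add: card_cartesian_product)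
  also have "\<dots> \<le> (d 0 + 1) * (\<Prod>j\<le>K. d (Suc j) + 1)" using IH by (rule mult_le_mono2)
  also have "\<dots> = (\<Prod>j\<le>Suc K. d j + 1)"
    by (simp add: prod.atMost_Suc_shift del: prod.atMost_Suc)
  finally show ?case unfolding n_def .
qed

lemma digits_ge:
  fixes p :: nat
  assumes "d k > 0"
  shows "p ^ k \<le> (\<Sum>j\<le>k. d j * p ^ j)"
proof -
  have "p ^ k \<le> d k * p ^ k" using assms by simp
  also have "\<dots> \<le> (\<Sum>j\<le>k. d j * p ^ j)"
    by (rule member_le_sum) auto
  finally show ?thesis .
qed

lemma exists_dvd_choose:
  fixes p :: nat
  assumes "prime p" "odd p" "\<And>j. j \<le> k \<Longrightarrow> d j < p" "d k > 0" "\<exists>j<k. d j \<noteq> p - 1"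
  shows "\<exists>x. 2 \<le> x \<and> x < (\<Sum>j\<le>k. d j * p ^ j) \<and> p dvd ((\<Sum>j\<le>k. d j * p ^ j) choose x)"
  using assms(3-5)
proof (induction k arbitrary: d)
  case 0
  then show ?case by auto
next
  case (Suc K)
  have p0: "p > 0" using assms(1) prime_gt_0_nat by auto
  have p2: "p \<ge> 2" using prime_ge_2_nat[OF assms(1)] .
  have "p \<noteq> 2" using assms(2) by auto
  then have p3: "p \<ge> 3" using p2 by linarith
  define n where "n = (\<Sum>j\<le>Suc K. d j * p ^ j)"
  define n' where "n' = (\<Sum>j\<le>K. d (Suc j) * p ^ j)"
  have d0: "d 0 < p" using Suc.prems by auto
  have nmod: "n mod p = d 0" unfolding n_def using digits_mod[where d=d and p=p and k="Suc K"] p0 d0 by simp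
  have ndiv: "n div p = n'" unfolding n_def n'_def using digits_div[where d=d and p=p and K=K] p0 d0 by simp
  have "p ^ 1 \<le> p ^ Suc K" using p0 by (intro power_increasing) auto
  then have pp: "p \<le> p ^ Suc K" by (simp only: power_one_right)
  have h1: "p ^ Suc K \<le> n" unfolding n_def by (rule digits_ge) (use Suc.prems(2) in auto)
  have np: "p \<le> n" using order_trans[OF pp h1] .
  show ?case
  proof (cases "d 0 = p - 1")
    case False
    then have "d 0 < p - 1" using d0 by auto
    then have "p dvd (n choose (p - 1))" using lucas_digit[OF assms(1), of n "p - 1"] nmod p0 by simp
    moreover have "2 \<le> p - 1" "p - 1 < n" using p3 np by auto
    ultimately show ?thesis unfolding n_def by blast
  next
    case True
    then obtain j where j: "j < Suc K" "d j \<noteq> p - 1" using Suc.prems by auto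
    then obtain j' where j': "j = Suc j'" using True by (cases j) auto
    have "\<exists>y. 2 \<le> y \<and> y < n' \<and> p dvd (n' choose y)"
      unfolding n'_def
    proof (rule Suc.IH)
      show "\<And>j. j \<le> K \<Longrightarrow> d (Suc j) < p" using Suc.prems by auto
      have "K > 0" using j j' by auto
      then show "0 < d (Suc K)" using Suc.prems by auto
      show "\<exists>j<K. d (Suc j) \<noteq> p - 1" using j j' by auto
    qed
    then obtain y where y: "2 \<le> y" "y < n'" "p dvd (n' choose y)" by auto
    define x where "x = p * y + d 0"
    have xm: "x mod p = d 0" "x div p = y" unfolding x_def using d0 p0 by auto
    have "p dvd (n choose x)" using lucas_high[OF assms(1), of n x] xm ndiv y by simp
    moreover have "2 \<le> x"
    proof -
      have "p * 1 \<le> p * y" using y by (intro mult_le_mono2) auto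
      then show ?thesis unfolding x_def using p3 by linarith
    qed
    moreover have "x < n"
    proof -
      have "p * Suc y \<le> p * n'" using y(2) by (intro mult_le_mono2) simp
      then have "p * y + p \<le> p * n'" by simp
      then have "x < p * n'" unfolding x_def using d0 by linarith
      moreover have "p * n' \<le> n" using ndiv div_mult_mod_eq[of n p] by (simp add: mult.commute)
      ultimately show ?thesis by linarith
    qed
    ultimately show ?thesis unfolding n_def by blast
  qed
qed

lemma all_pm1:
  fixes p :: nat
  assumes "p > 0" "\<forall>j<k. d j = p - 1"
  shows "(\<Sum>j\<le>k. d j * p ^ j) + 1 = (\<Prod>j\<le>k. d j + 1)"
proof -
  have "(\<Sum>j<k. d j * p ^ j) + 1 = p ^ k \<and> (\<Prod>j<k. d j + 1) = p ^ k"
    using assms(2)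
  proof (induction k)
    case 0 then show ?case by simp
  next
    case (Suc k)
    then have IH: "(\<Sum>j<k. d j * p ^ j) + 1 = p ^ k" "(\<Prod>j<k. d j + 1) = p ^ k" by auto
    have dk: "d k = p - 1" using Suc.prems by auto
    have "(\<Sum>j<Suc k. d j * p ^ j) + 1 = ((\<Sum>j<k. d j * p ^ j) + 1) + (p - 1) * p ^ k"
      using dk by simp
    also have "\<dots> = p ^ k + (p - 1) * p ^ k" using IH by simp
    also have "\<dots> = p ^ Suc k" using assms(1) by (cases p) (auto simp: algebra_simps)
    finally have 1: "(\<Sum>j<Suc k. d j * p ^ j) + 1 = p ^ Suc k" .
    have "(\<Prod>j<Suc k. d j + 1) = p ^ Suc k" using IH dk assms(1) by (simp add: mult.commute)
    with 1 show ?case by simp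
  qed
  then show ?thesis
    by (simp add: lessThan_Suc_atMost[symmetric] algebra_simps)
qed

lemma signed_set_iff: "i \<in> signed_set n \<longleftrightarrow> i \<noteq> 0 \<and> \<bar>i\<bar> \<le> int n"
  by (auto simp: signed_set_def)

lemma signed_set_neg[simp]: "- i \<in> signed_set n \<longleftrightarrow> i \<in> signed_set n"
  by (auto simp: signed_set_def)

lemma finite_signed_set[simp]: "finite (signed_set n)"
proof -
  have "signed_set n \<subseteq> {- int n..int n}" by (auto simp: signed_set_def)
  then show ?thesis by (rule finite_subset) auto
qed

lemma pos_in_signed_set: "1 \<le> i \<Longrightarrow> i \<le> int n \<Longrightarrow> i \<in> signed_set n"
  by (auto simp: signed_set_def)

lemma sp_maps: "w \<in> signed_perms n \<Longrightarrow> i \<in> signed_set n \<Longrightarrow> w i \<in> signed_set n"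
  by (auto simp: signed_perms_def bij_betw_def)

lemma sp_inj: "w \<in> signed_perms n \<Longrightarrow> inj_on w (signed_set n)"
  by (auto simp: signed_perms_def bij_betw_def)

lemma sp_bij: "w \<in> signed_perms n \<Longrightarrow> bij_betw w (signed_set n) (signed_set n)"
  by (auto simp: signed_perms_def)

lemma sp_out: "w \<in> signed_perms n \<Longrightarrow> i \<notin> signed_set n \<Longrightarrow> w i = i"
  by (auto simp: signed_perms_def)

lemma sp_odd: "w \<in> signed_perms n \<Longrightarrow> w (- i) = - w i"
proof (cases "i \<in> signed_set n")
  case True
  assume "w \<in> signed_perms n" then show ?thesis using True by (auto simp: signed_perms_def)
next
  case False
  assume w: "w \<in> signed_perms n"
  then show ?thesis using False sp_out[OF w, of i] sp_out[OF w, of "-i"] by auto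
qed

lemma sp_abs_inj:
  assumes w: "w \<in> signed_perms n" and i: "i \<in> signed_set n" and j: "j \<in> signed_set n"
    and eq: "\<bar>w i\<bar> = \<bar>w j\<bar>"
  shows "\<bar>i\<bar> = \<bar>j\<bar>"
proof -
  have "w i = w j \<or> w i = w (- j)" using eq sp_odd[OF w, of j] by (auto simp: abs_if split: if_splits)
  then have "i = j \<or> i = - j" using sp_inj[OF w] i j by (auto dest: inj_onD)
  then show ?thesis by auto
qed

lemma sp_comp:
  assumes "f \<in> signed_perms n" "w \<in> signed_perms n"
  shows "f \<circ> w \<in> signed_perms n"
  unfolding signed_perms_def
proof (intro CollectI conjI ballI allI impI)
  show "bij_betw (f \<circ> w) (signed_set n) (signed_set n)"
    using sp_bij[OF assms(1)] sp_bij[OF assms(2)] by (rule bij_betw_trans[rotated])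
  fix i
  show "(f \<circ> w) (- i) = - (f \<circ> w) i" using sp_odd[OF assms(1)] sp_odd[OF assms(2)] by simp
next
  fix i assume "i \<notin> signed_set n"
  then show "(f \<circ> w) i = i" using sp_out[OF assms(1)] sp_out[OF assms(2)] by simp
qed

lemma finite_signed_perms: "finite (signed_perms n)"
proof -
  have "inj_on (\<lambda>w. restrict w (signed_set n)) (signed_perms n)"
  proof (rule inj_onI)
    fix v w assume v: "v \<in> signed_perms n" and w: "w \<in> signed_perms n"
      and eq: "restrict v (signed_set n) = restrict w (signed_set n)"
    show "v = w"
    proof
      fix i show "v i = w i"
      proof (cases "i \<in> signed_set n")
        case True then show ?thesis using fun_cong[OF eq, of i] by simp
      next
        case False then show ?thesis using sp_out[OF v] sp_out[OF w] by simp
      qed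
    qed
  qed
  moreover have "(\<lambda>w. restrict w (signed_set n)) ` signed_perms n \<subseteq> PiE (signed_set n) (\<lambda>_. signed_set n)"
    using sp_maps by auto
  moreover have "finite (PiE (signed_set n) (\<lambda>_. signed_set n))" by (intro finite_PiE) auto
  ultimately show ?thesis by (metis finite_imageD finite_subset)
qed

lemma finite_esp: "finite (even_signed_perms n)"
  using finite_signed_perms by (rule finite_subset[rotated]) (auto simp: even_signed_perms_def)

lemma esp_sp: "w \<in> even_signed_perms n \<Longrightarrow> w \<in> signed_perms n"
  by (auto simp: even_signed_perms_def)

lemma wD_in:
  assumes w: "w \<in> signed_perms n" and "2 \<le> n" "i \<le> n"
  shows "wD w i \<in> signed_set n"
proof (cases "i = 0")
  case True
  have "(2::int) \<in> signed_set n" using assms by (auto simp: signed_set_def)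
  then show ?thesis using True sp_maps[OF w] by (simp add: wD_def)
next
  case False
  then have "int i \<in> signed_set n" using assms by (auto simp: signed_set_def)
  then show ?thesis using False sp_maps[OF w] by (simp add: wD_def)
qed

lemma wD_abs_neq:
  assumes w: "w \<in> signed_perms n" and "2 \<le> n" "i < n"
  shows "\<bar>wD w i\<bar> \<noteq> \<bar>wD w (i + 1)\<bar>"
proof (cases "i = 0")
  case True
  have "(2::int) \<in> signed_set n" "(1::int) \<in> signed_set n" using assms by (auto simp: signed_set_def)
  then have "\<bar>w 2\<bar> \<noteq> \<bar>w 1\<bar>" using sp_abs_inj[OF w] by fastforce
  then show ?thesis using True by (simp add: wD_def)
next
  case False
  then have "int i \<in> signed_set n" "int i + 1 \<in> signed_set n" using assms by (auto simp: signed_set_def)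
  then have "\<bar>w (int i)\<bar> \<noteq> \<bar>w (int i + 1)\<bar>" using sp_abs_inj[OF w] by fastforce
  then show ?thesis using False by (simp add: wD_def add.commute)
qed

lemma wD_comp:
  assumes "\<And>v. f (- v) = - f v"
  shows "wD (f \<circ> w) i = f (wD w i)"
  using assms by (simp add: wD_def)

lemma descD_comp:
  assumes "\<And>v. f (- v) = - f v"
  shows "descD n (f \<circ> w) = {i \<in> {0..<n}. f (wD w i) > f (wD w (i + 1))}"
  using assms by (simp add: descD_def wD_def)

lemma descD_sub: "descD n w \<subseteq> {0..<n}"
  by (auto simp: descD_def)

definition sg :: "int \<Rightarrow> int" where "sg v = (if v < 0 then -1 else 1)"

lemma prod_sg:
  assumes "finite A"
  shows "(\<Prod>i\<in>A. sg (w i)) = (-1) ^ card {i \<in> A. w i < 0}"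
proof -
  have "(\<Prod>i\<in>A. sg (w i)) = (\<Prod>i\<in>A \<inter> {i. w i < 0}. -1) * (\<Prod>i\<in>A \<inter> - {i. w i < 0}. 1)"
    unfolding sg_def using prod.If_cases[OF assms, of "\<lambda>i. w i < 0" "\<lambda>_. -1::int" "\<lambda>_. 1"] by simp
  also have "\<dots> = (-1) ^ card {i \<in> A. w i < 0}" by (simp add: Int_def conj_commute)
  finally show ?thesis .
qed

lemma even_iff_prod:
  assumes "finite A"
  shows "even (card {i \<in> A. w i < 0}) \<longleftrightarrow> (\<Prod>i\<in>A. sg (w i)) = 1"
  using prod_sg[OF assms, of w] by (simp add: minus_one_power_iff)

lemma abs_bij:
  assumes w: "w \<in> signed_perms n"
  shows "bij_betw (\<lambda>i. \<bar>w i\<bar>) {1..int n} {1..int n}"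
proof -
  have inj: "inj_on (\<lambda>i. \<bar>w i\<bar>) {1..int n}"
  proof (rule inj_onI)
    fix i j assume i: "i \<in> {1..int n}" and j: "j \<in> {1..int n}" and eq: "\<bar>w i\<bar> = \<bar>w j\<bar>"
    have "\<bar>i\<bar> = \<bar>j\<bar>" using sp_abs_inj[OF w _ _ eq] i j by (auto simp: signed_set_def)
    then show "i = j" using i j by auto
  qed
  have sub: "(\<lambda>i. \<bar>w i\<bar>) ` {1..int n} \<subseteq> {1..int n}"
  proof
    fix y assume "y \<in> (\<lambda>i. \<bar>w i\<bar>) ` {1..int n}"
    then obtain i where i: "i \<in> {1..int n}" and y: "y = \<bar>w i\<bar>" by auto
    have "w i \<in> signed_set n" using sp_maps[OF w] i by (auto simp: signed_set_def)
    then show "y \<in> {1..int n}" using y by (auto simp: signed_set_def)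
  qed
  have "(\<lambda>i. \<bar>w i\<bar>) ` {1..int n} = {1..int n}" using endo_inj_surj[OF _ sub inj] by simp
  then show ?thesis using inj by (simp add: bij_betw_def)
qed

definition phi :: "nat \<Rightarrow> int \<Rightarrow> int" where
  "phi n v = (if v \<in> signed_set n \<and> (2 \<le> \<bar>v\<bar> \<or> even n) then - v else v)"

lemma phi_odd: "phi n (- v) = - phi n v"
  by (auto simp: phi_def)

lemma phi_phi: "phi n (phi n v) = v"
  by (auto simp: phi_def)

lemma phi_maps: "v \<in> signed_set n \<Longrightarrow> phi n v \<in> signed_set n"
  by (auto simp: phi_def)

lemma phi_sp: "phi n \<in> signed_perms n"
  unfolding signed_perms_def
proof (intro CollectI conjI ballI allI impI)
  show "bij_betw (phi n) (signed_set n) (signed_set n)"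
    by (rule bij_betw_byWitness[where f'="phi n"]) (auto simp: phi_phi phi_maps)
qed (auto simp: phi_def phi_odd)

lemma phi_rev:
  assumes "a \<in> signed_set n" "b \<in> signed_set n" "\<bar>a\<bar> \<noteq> \<bar>b\<bar>"
  shows "phi n a < phi n b \<longleftrightarrow> b < a"
  using assms by (auto simp: phi_def signed_set_def)

lemma sg_phi:
  assumes "v \<in> signed_set n"
  shows "sg (phi n v) = sg v * (if 2 \<le> \<bar>v\<bar> \<or> even n then -1 else 1)"
  using assms by (auto simp: phi_def sg_def signed_set_def)

lemma prod_t:
  "(\<Prod>a\<in>{1..int n}. (if 2 \<le> \<bar>a\<bar> \<or> even n then -1 else 1 :: int)) = 1"
proof (cases "even n")
  case True
  then show ?thesis by simp
next
  case False
  then have n1: "n \<ge> 1" by (cases n) auto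
  have "{1..int n} = insert 1 {2..int n}" using n1 by auto
  then have "(\<Prod>a\<in>{1..int n}. (if 2 \<le> \<bar>a\<bar> \<or> even n then -1 else 1 :: int))
     = (\<Prod>a\<in>{2..int n}. (if 2 \<le> \<bar>a\<bar> \<or> even n then -1 else 1 :: int))"
    using False by simp
  also have "\<dots> = (\<Prod>a\<in>{2..int n}. (-1::int))" by (intro prod.cong) auto
  also have "\<dots> = (-1) ^ (n - 1)" using n1 by (simp add: nat_diff_distrib)
  also have "\<dots> = 1" using False n1 by simp
  finally show ?thesis .
qed

lemma phi_even:
  assumes w: "w \<in> even_signed_perms n"
  shows "phi n \<circ> w \<in> even_signed_perms n"
proof -
  have wsp: "w \<in> signed_perms n" using w by (simp add: even_signed_perms_def)
  have sp: "phi n \<circ> w \<in> signed_perms n" using sp_comp[OF phi_sp wsp] .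
  have wi: "w i \<in> signed_set n" if "i \<in> {1..int n}" for i
    using sp_maps[OF wsp] that by (auto simp: signed_set_def)
  have "(\<Prod>i\<in>{1..int n}. sg ((phi n \<circ> w) i))
      = (\<Prod>i\<in>{1..int n}. sg (w i) * (if 2 \<le> \<bar>w i\<bar> \<or> even n then -1 else 1))"
    using sg_phi wi by (intro prod.cong) auto
  also have "\<dots> = (\<Prod>i\<in>{1..int n}. sg (w i)) * (\<Prod>i\<in>{1..int n}. (if 2 \<le> \<bar>w i\<bar> \<or> even n then -1 else 1))"
    by (simp add: prod.distrib)
  also have "(\<Prod>i\<in>{1..int n}. (if 2 \<le> \<bar>w i\<bar> \<or> even n then -1 else 1))
     = (\<Prod>a\<in>{1..int n}. (if 2 \<le> \<bar>a\<bar> \<or> even n then -1 else 1 :: int))"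
    using prod.reindex_bij_betw[OF abs_bij[OF wsp], of "\<lambda>a. (if 2 \<le> \<bar>a\<bar> \<or> even n then -1 else 1 :: int)"]
    by simp
  also have "\<dots> = 1" by (rule prod_t)
  also have "(\<Prod>i\<in>{1..int n}. sg (w i)) = 1"
    using w even_iff_prod[of "{1..int n}" w] by (simp add: even_signed_perms_def)
  finally have "(\<Prod>i\<in>{1..int n}. sg ((phi n \<circ> w) i)) = 1" by simp
  then have "even (card {i \<in> {1..int n}. (phi n \<circ> w) i < 0})"
    using even_iff_prod[of "{1..int n}" "phi n \<circ> w"] by simp
  then show ?thesis using sp by (simp add: even_signed_perms_def)
qed

lemma phi_descD:
  assumes w: "w \<in> signed_perms n" and n2: "2 \<le> n"
  shows "descD n (phi n \<circ> w) = {0..<n} - descD n w"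
proof -
  have "descD n (phi n \<circ> w) = {i \<in> {0..<n}. phi n (wD w i) > phi n (wD w (i + 1))}"
    by (rule descD_comp) (rule phi_odd)
  also have "\<dots> = {i \<in> {0..<n}. wD w i < wD w (i + 1)}"
  proof (intro Collect_cong conj_cong refl)
    fix i assume "i \<in> {0..<n}"
    then have i: "i < n" by simp
    show "(phi n (wD w i) > phi n (wD w (i + 1))) = (wD w i < wD w (i + 1))"
      using phi_rev[OF wD_in[OF w n2, of "i+1"] wD_in[OF w n2, of i]] wD_abs_neq[OF w n2 i] i by auto
  qed
  also have "\<dots> = {0..<n} - descD n w"
  proof -
    have "(wD w i < wD w (i + 1)) = (\<not> wD w i > wD w (i + 1))" if "i < n" for i
      using wD_abs_neq[OF w n2 that] by auto
    then show ?thesis unfolding descD_def by auto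
  qed
  finally show ?thesis .
qed

definition rr :: "nat \<Rightarrow> nat set \<Rightarrow> nat" where
  "rr n S = card {w \<in> even_signed_perms n. descD n w = S}"

lemma rr_compl:
  assumes "S \<subseteq> {0..<n}" "2 \<le> n"
  shows "rr n ({0..<n} - S) = rr n S"
proof -
  have "bij_betw (\<lambda>w. phi n \<circ> w) {w \<in> even_signed_perms n. descD n w = S}
          {w \<in> even_signed_perms n. descD n w = {0..<n} - S}"
  proof (rule bij_betw_byWitness[where f'="\<lambda>w. phi n \<circ> w"])
    show "\<forall>a\<in>{w \<in> even_signed_perms n. descD n w = S}. phi n \<circ> (phi n \<circ> a) = a"
      by (auto simp: fun_eq_iff phi_phi)
    show "\<forall>a\<in>{w \<in> even_signed_perms n. descD n w = {0..<n} - S}. phi n \<circ> (phi n \<circ> a) = a"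
      by (auto simp: fun_eq_iff phi_phi)
    show "(\<circ>) (phi n) ` {w \<in> even_signed_perms n. descD n w = S}
       \<subseteq> {w \<in> even_signed_perms n. descD n w = {0..<n} - S}"
      using phi_even phi_descD esp_sp assms(2) by auto
    show "(\<circ>) (phi n) ` {w \<in> even_signed_perms n. descD n w = {0..<n} - S}
       \<subseteq> {w \<in> even_signed_perms n. descD n w = S}"
      using phi_even phi_descD esp_sp assms by auto
  qed
  then show ?thesis unfolding rr_def by (simp add: bij_betw_same_card)
qed

lemma mono_bij_exists:
  fixes A B :: "nat set"
  assumes "finite A" "finite B" "card A = card B"
  obtains h where "bij_betw h A B" "strict_mono_on A h"
proof -
  obtain eA where eA: "bij_betw eA {..<card A} A" "strict_mono_on {..<card A} eA"
    using ex_bij_betw_strict_mono_card[OF assms(1)] by blast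
  obtain eB where eB: "bij_betw eB {..<card A} B" "strict_mono_on {..<card A} eB"
    using ex_bij_betw_strict_mono_card[OF assms(2)] assms(3) by metis
  define h where "h = eB \<circ> the_inv_into {..<card A} eA"
  have bij: "bij_betw h A B" unfolding h_def
    using bij_betw_trans[OF bij_betw_the_inv_into[OF eA(1)] eB(1)] .
  have inA: "the_inv_into {..<card A} eA a \<in> {..<card A}" if "a \<in> A" for a
    using bij_betw_the_inv_into[OF eA(1)] that by (auto simp: bij_betw_def)
  have eAi: "eA (the_inv_into {..<card A} eA a) = a" if "a \<in> A" for a
    using f_the_inv_into_f[of eA "{..<card A}" a] eA(1) that by (auto simp: bij_betw_def)
  have "strict_mono_on A h"
  proof (rule strict_mono_onI)
    fix a b assume a: "a \<in> A" and b: "b \<in> A" and ab: "a < b"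
    define i where "i = the_inv_into {..<card A} eA a"
    define j where "j = the_inv_into {..<card A} eA b"
    have ij: "i \<in> {..<card A}" "j \<in> {..<card A}" using inA a b unfolding i_def j_def by auto
    have "i < j"
    proof (rule ccontr)
      assume "\<not> i < j"
      then have "j \<le> i" by simp
      then have "eA j \<le> eA i" using strict_mono_on_leD[OF eA(2)] ij by auto
      then show False using eAi a b ab unfolding i_def j_def by auto
    qed
    then show "h a < h b" using strict_mono_onD[OF eB(2)] ij unfolding h_def i_def j_def by auto
  qed
  then show ?thesis using bij that by blast
qed

definition cls :: "nat \<Rightarrow> nat set \<Rightarrow> nat \<Rightarrow> nat set \<Rightarrow> (int \<Rightarrow> int) set" where
  "cls n T x C = {w \<in> even_signed_perms n. descD n w \<subseteq> T \<and> (\<lambda>i. nat \<bar>w i\<bar>) ` {1..int x} = C}"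

definition lift :: "nat \<Rightarrow> (nat \<Rightarrow> nat) \<Rightarrow> int \<Rightarrow> int" where
  "lift n \<rho> v = (if v \<in> signed_set n then sgn v * int (\<rho> (nat \<bar>v\<bar>)) else v)"

locale relab =
  fixes n :: nat and \<rho> :: "nat \<Rightarrow> nat" and A B :: "nat set"
  assumes bij: "bij_betw \<rho> {1..n} {1..n}"
    and AB: "\<rho> ` A = B" and Asub: "A \<subseteq> {1..n}"
    and monoA: "strict_mono_on A \<rho>" and monoC: "strict_mono_on ({1..n} - A) \<rho>"
begin

lemma rho_range: "a \<in> {1..n} \<Longrightarrow> \<rho> a \<in> {1..n}"
  using bij by (auto simp: bij_betw_def)

lemma lift_odd: "lift n \<rho> (- v) = - lift n \<rho> v"
  by (simp add: lift_def sgn_minus)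

lemma nat_abs_in: "v \<in> signed_set n \<Longrightarrow> nat \<bar>v\<bar> \<in> {1..n}"
  by (auto simp: signed_set_def)

lemma rho_pos:
  assumes v: "v \<in> signed_set n"
  shows "1 \<le> \<rho> (nat \<bar>v\<bar>)" "\<rho> (nat \<bar>v\<bar>) \<le> n"
  using rho_range[OF nat_abs_in[OF v]] by auto

lemma lift_maps:
  assumes v: "v \<in> signed_set n" shows "lift n \<rho> v \<in> signed_set n"
  using v rho_pos[OF v] by (cases "v < 0") (auto simp: lift_def signed_set_def)

lemma lift_abs: "v \<in> signed_set n \<Longrightarrow> nat \<bar>lift n \<rho> v\<bar> = \<rho> (nat \<bar>v\<bar>)"
  by (auto simp: lift_def signed_set_def sgn_if)

lemma lift_sign:
  assumes v: "v \<in> signed_set n" shows "lift n \<rho> v < 0 \<longleftrightarrow> v < 0"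
  using v rho_pos[OF v] by (cases "v < 0") (auto simp: lift_def signed_set_def)

lemma lift_inj_ss: "inj_on (lift n \<rho>) (signed_set n)"
proof (rule inj_onI)
  fix a b assume a: "a \<in> signed_set n" and b: "b \<in> signed_set n" and eq: "lift n \<rho> a = lift n \<rho> b"
  have "\<rho> (nat \<bar>a\<bar>) = \<rho> (nat \<bar>b\<bar>)" using lift_abs[OF a] lift_abs[OF b] eq by simp
  then have "nat \<bar>a\<bar> = nat \<bar>b\<bar>" using bij nat_abs_in[OF a] nat_abs_in[OF b]
    by (auto simp: bij_betw_def dest: inj_onD)
  moreover have "(a < 0) = (b < 0)" using lift_sign[OF a] lift_sign[OF b] eq by simp
  ultimately show "a = b" using a b by (auto simp: signed_set_def)
qed

lemma lift_sp: "lift n \<rho> \<in> signed_perms n"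
  unfolding signed_perms_def
proof (intro CollectI conjI ballI allI impI)
  have sub: "lift n \<rho> ` signed_set n \<subseteq> signed_set n" using lift_maps by auto
  show "bij_betw (lift n \<rho>) (signed_set n) (signed_set n)"
    using endo_inj_surj[OF finite_signed_set sub lift_inj_ss] lift_inj_ss by (simp add: bij_betw_def)
qed (auto simp: lift_def lift_odd sgn_minus)

lemma lift_mono_on:
  assumes X: "strict_mono_on X \<rho>" and a: "a \<in> signed_set n" and b: "b \<in> signed_set n"
    and aX: "nat \<bar>a\<bar> \<in> X" and bX: "nat \<bar>b\<bar> \<in> X" and ab: "a < b"
  shows "lift n \<rho> a < lift n \<rho> b"
proof -
  have pa: "\<rho> (nat \<bar>a\<bar>) \<ge> 1" "\<rho> (nat \<bar>b\<bar>) \<ge> 1" using rho_range[OF nat_abs_in[OF a]] rho_range[OF nat_abs_in[OF b]] by auto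
  have nz: "a \<noteq> 0" "b \<noteq> 0" using a b by (auto simp: signed_set_def)
  have "(a < 0 \<and> 0 < b) \<or> 0 < a \<or> b < 0" using ab nz by linarith
  then consider "a < 0" "0 < b" | "0 < a" | "b < 0" by blast
  then show ?thesis
  proof cases
    case 1 then show ?thesis using a b pa by (auto simp: lift_def)
  next
    case 2
    then have "nat \<bar>a\<bar> < nat \<bar>b\<bar>" using ab by auto
    then have "\<rho> (nat \<bar>a\<bar>) < \<rho> (nat \<bar>b\<bar>)" using strict_mono_onD[OF X aX bX] by simp
    then show ?thesis using 2 ab a b by (auto simp: lift_def)
  next
    case 3
    then have "nat \<bar>b\<bar> < nat \<bar>a\<bar>" using ab by auto
    then have "\<rho> (nat \<bar>b\<bar>) < \<rho> (nat \<bar>a\<bar>)" using strict_mono_onD[OF X bX aX] by simp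
    then show ?thesis using 3 ab a b by (auto simp: lift_def)
  qed
qed

lemma lift_rev_on:
  assumes X: "strict_mono_on X \<rho>" and a: "a \<in> signed_set n" and b: "b \<in> signed_set n"
    and aX: "nat \<bar>a\<bar> \<in> X" and bX: "nat \<bar>b\<bar> \<in> X" and gt: "lift n \<rho> a > lift n \<rho> b"
  shows "a > b"
proof (rule ccontr)
  assume "\<not> a > b"
  then have "a < b \<or> a = b" by auto
  then show False using lift_mono_on[OF X b a bX aX] lift_mono_on[OF X a b aX bX] gt by auto
qed


end

lemma pos_class:
  assumes w: "w \<in> signed_perms n" and x: "2 \<le> x" "x < n" and j: "j \<le> n"
  shows "j \<le> x \<Longrightarrow> nat \<bar>wD w j\<bar> \<in> (\<lambda>i. nat \<bar>w i\<bar>) ` {1..int x}"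
    and "x < j \<Longrightarrow> nat \<bar>wD w j\<bar> \<in> {1..n} - (\<lambda>i. nat \<bar>w i\<bar>) ` {1..int x}"
proof -
  assume "j \<le> x"
  show "nat \<bar>wD w j\<bar> \<in> (\<lambda>i. nat \<bar>w i\<bar>) ` {1..int x}"
  proof (cases "j = 0")
    case True
    then show ?thesis using x by (auto simp: wD_def intro!: image_eqI[where x=2])
  next
    case False
    then show ?thesis using \<open>j \<le> x\<close> by (auto simp: wD_def intro!: image_eqI[where x="int j"])
  qed
next
  assume jx: "x < j"
  have js: "int j \<in> signed_set n" using j jx x by (auto simp: signed_set_def)
  have wj: "wD w j = w (int j)" using jx x by (simp add: wD_def)
  have "nat \<bar>w (int j)\<bar> \<in> {1..n}" using sp_maps[OF w js] by (auto simp: signed_set_def)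
  moreover have "nat \<bar>w (int j)\<bar> \<notin> (\<lambda>i. nat \<bar>w i\<bar>) ` {1..int x}"
  proof
    assume "nat \<bar>w (int j)\<bar> \<in> (\<lambda>i. nat \<bar>w i\<bar>) ` {1..int x}"
    then obtain i where i: "i \<in> {1..int x}" and eq: "nat \<bar>w (int j)\<bar> = nat \<bar>w i\<bar>" by auto
    have iS: "i \<in> signed_set n" using i x by (auto simp: signed_set_def)
    have "\<bar>w (int j)\<bar> = \<bar>w i\<bar>" using eq by simp
    then have "\<bar>int j\<bar> = \<bar>i\<bar>" using sp_abs_inj[OF w js iS] by simp
    then show False using i jx by auto
  qed
  ultimately show "nat \<bar>wD w j\<bar> \<in> {1..n} - (\<lambda>i. nat \<bar>w i\<bar>) ` {1..int x}" using wj by simp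
qed

context relab begin

lemma cls_map:
  assumes w: "w \<in> cls n T x A" and xT: "x \<in> T" and x: "2 \<le> x" "x < n"
  shows "lift n \<rho> \<circ> w \<in> cls n T x B"
proof -
  have we: "w \<in> even_signed_perms n" and wT: "descD n w \<subseteq> T" and wA: "(\<lambda>i. nat \<bar>w i\<bar>) ` {1..int x} = A"
    using w by (auto simp: cls_def)
  have wsp: "w \<in> signed_perms n" using we by (simp add: even_signed_perms_def)
  have n2: "2 \<le> n" using x by simp
  have sp: "lift n \<rho> \<circ> w \<in> signed_perms n" using sp_comp[OF lift_sp wsp] .
  have "{i \<in> {1..int n}. (lift n \<rho> \<circ> w) i < 0} = {i \<in> {1..int n}. w i < 0}"
    using lift_sign sp_maps[OF wsp] pos_in_signed_set by auto
  then have ev: "lift n \<rho> \<circ> w \<in> even_signed_perms n" using we sp by (simp add: even_signed_perms_def)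
  have img: "(\<lambda>i. nat \<bar>(lift n \<rho> \<circ> w) i\<bar>) ` {1..int x} = B"
  proof -
    have "(\<lambda>i. nat \<bar>(lift n \<rho> \<circ> w) i\<bar>) ` {1..int x} = \<rho> ` (\<lambda>i. nat \<bar>w i\<bar>) ` {1..int x}"
      unfolding image_image using lift_abs sp_maps[OF wsp] pos_in_signed_set x
      by (intro image_cong refl) auto
    then show ?thesis using wA AB by simp
  qed
  have desc: "descD n (lift n \<rho> \<circ> w) \<subseteq> T"
  proof
    fix i assume i: "i \<in> descD n (lift n \<rho> \<circ> w)"
    show "i \<in> T"
    proof (cases "i = x")
      case True then show ?thesis using xT by simp
    next
      case False
      have il: "i < n" and gt: "lift n \<rho> (wD w i) > lift n \<rho> (wD w (i + 1))"
        using i descD_comp[of "lift n \<rho>" n w, OF lift_odd] by auto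
      have a: "wD w i \<in> signed_set n" "wD w (i+1) \<in> signed_set n" using wD_in[OF wsp n2] il by auto
      have "wD w i > wD w (i + 1)"
      proof (cases "i < x")
        case True
        then show ?thesis using lift_rev_on[OF monoA a(1) a(2) _ _ gt] pos_class(1)[OF wsp x, of i] pos_class(1)[OF wsp x, of "i+1"] wA il by auto
      next
        case False
        then have "x < i" using \<open>i \<noteq> x\<close> by auto
        then show ?thesis using lift_rev_on[OF monoC a(1) a(2) _ _ gt] pos_class(2)[OF wsp x, of i] pos_class(2)[OF wsp x, of "i+1"] wA il by auto
      qed
      then have "i \<in> descD n w" using il by (simp add: descD_def)
      then show ?thesis using wT by auto
    qed
  qed
  show ?thesis using ev img desc by (simp add: cls_def)
qed

lemma lift_inj: "inj (lift n \<rho>)"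
proof (rule injI)
  fix a b assume eq: "lift n \<rho> a = lift n \<rho> b"
  show "a = b"
  proof (cases "a \<in> signed_set n"; cases "b \<in> signed_set n")
    assume "a \<in> signed_set n" "b \<in> signed_set n"
    then show ?thesis using lift_inj_ss eq by (auto dest: inj_onD)
  next
    assume "a \<in> signed_set n" "b \<notin> signed_set n"
    then show ?thesis using eq lift_maps[of a] by (auto simp: lift_def)
  next
    assume "a \<notin> signed_set n" "b \<in> signed_set n"
    then show ?thesis using eq lift_maps[of b] by (auto simp: lift_def)
  next
    assume "a \<notin> signed_set n" "b \<notin> signed_set n"
    then show ?thesis using eq by (auto simp: lift_def)
  qed
qed

lemma cls_le:
  assumes xT: "x \<in> T" and x: "2 \<le> x" "x < n"
  shows "card (cls n T x A) \<le> card (cls n T x B)"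
proof (rule card_inj_on_le)
  show "inj_on (\<lambda>w. lift n \<rho> \<circ> w) (cls n T x A)"
  proof (rule inj_onI)
    fix v w assume eq: "lift n \<rho> \<circ> v = lift n \<rho> \<circ> w"
    show "v = w"
    proof
      fix i
      have "lift n \<rho> (v i) = lift n \<rho> (w i)" using fun_cong[OF eq, of i] by simp
      then show "v i = w i" using lift_inj by (auto dest: injD)
    qed
  qed
  show "(\<lambda>w. lift n \<rho> \<circ> w) ` cls n T x A \<subseteq> cls n T x B" using cls_map[OF _ xT x] by auto
  show "finite (cls n T x B)" using finite_esp by (rule finite_subset[rotated]) (auto simp: cls_def)
qed

end

lemma dc_single: "desc_comp [a] = {}"
  by (simp add: desc_comp_def)

lemma dc_cons:
  assumes "\<beta> \<noteq> []"
  shows "desc_comp (a # \<beta>) = (\<lambda>s. a + s) ` insert 0 (desc_comp \<beta>)"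
proof -
  have "desc_comp (a # \<beta>) = {sum_list (take j (a # \<beta>)) | j. 1 \<le> j \<and> j \<le> length \<beta>}"
    by (simp add: desc_comp_def)
  also have "\<dots> = (\<lambda>j. a + sum_list (take j \<beta>)) ` {..length \<beta> - 1}"
  proof (intro set_eqI iffI)
    fix y assume "y \<in> {sum_list (take j (a # \<beta>)) | j. 1 \<le> j \<and> j \<le> length \<beta>}"
    then obtain j where j: "1 \<le> j" "j \<le> length \<beta>" "y = sum_list (take j (a # \<beta>))" by auto
    then obtain j' where "j = Suc j'" by (cases j) auto
    then show "y \<in> (\<lambda>j. a + sum_list (take j \<beta>)) ` {..length \<beta> - 1}" using j by auto
  next
    fix y assume "y \<in> (\<lambda>j. a + sum_list (take j \<beta>)) ` {..length \<beta> - 1}"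
    then obtain j where j: "j \<le> length \<beta> - 1" "y = a + sum_list (take j \<beta>)" by auto
    then have "y = sum_list (take (Suc j) (a # \<beta>))" "1 \<le> Suc j" "Suc j \<le> length \<beta>"
      using assms by (auto simp: Suc_le_eq) (cases \<beta>; auto)
    then show "y \<in> {sum_list (take j (a # \<beta>)) | j. 1 \<le> j \<and> j \<le> length \<beta>}" by blast
  qed
  also have "\<dots> = (\<lambda>s. a + s) ` ((\<lambda>j. sum_list (take j \<beta>)) ` {..length \<beta> - 1})"
    by (simp add: image_image)
  also have "(\<lambda>j. sum_list (take j \<beta>)) ` {..length \<beta> - 1} = insert 0 (desc_comp \<beta>)"
  proof (intro set_eqI iffI)
    fix y assume "y \<in> (\<lambda>j. sum_list (take j \<beta>)) ` {..length \<beta> - 1}"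
    then obtain j where j: "j \<le> length \<beta> - 1" "y = sum_list (take j \<beta>)" by auto
    then show "y \<in> insert 0 (desc_comp \<beta>)"
      by (cases "j = 0") (auto simp: desc_comp_def)
  next
    fix y assume "y \<in> insert 0 (desc_comp \<beta>)"
    then show "y \<in> (\<lambda>j. sum_list (take j \<beta>)) ` {..length \<beta> - 1}"
      by (auto simp: desc_comp_def intro: image_eqI[where x=0])
  qed
  finally show ?thesis .
qed

lemma dc_pos:
  assumes "\<beta> \<noteq> []" "hd \<beta> > 0" "s \<in> desc_comp \<beta>"
  shows "s \<ge> hd \<beta>"
proof -
  obtain j where j: "1 \<le> j" "s = sum_list (take j \<beta>)" using assms(3) by (auto simp: desc_comp_def)
  obtain b bs where b: "\<beta> = b # bs" using assms(1) by (cases \<beta>) auto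
  obtain j' where "j = Suc j'" using j by (cases j) auto
  then show ?thesis using j b by auto
qed

lemma dc_mem_hd:
  assumes "length \<beta> \<ge> 2"
  shows "hd \<beta> \<in> desc_comp \<beta>"
proof -
  obtain b bs where b: "\<beta> = b # bs" using assms by (cases \<beta>) auto
  have "sum_list (take 1 \<beta>) = hd \<beta>" using b by simp
  then show ?thesis unfolding desc_comp_def using assms by force
qed

lemma pc_cons:
  "pseudo_comp n (a # \<beta>) \<longleftrightarrow> (\<beta> = [] \<and> a = n) \<or>
     (\<beta> \<noteq> [] \<and> hd \<beta> > 0 \<and> pseudo_comp (n - a) \<beta> \<and> a \<le> n)"
proof
  assume pc: "pseudo_comp n (a # \<beta>)"
  show "(\<beta> = [] \<and> a = n) \<or> (\<beta> \<noteq> [] \<and> hd \<beta> > 0 \<and> pseudo_comp (n - a) \<beta> \<and> a \<le> n)"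
  proof (cases "\<beta> = []")
    case True then show ?thesis using pc by (simp add: pseudo_comp_def)
  next
    case False
    have pos: "\<forall>j\<in>{1..<length (a # \<beta>)}. (a # \<beta>) ! j > 0" and s: "sum_list (a # \<beta>) = n"
      using pc by (auto simp: pseudo_comp_def)
    have "\<beta> ! j > 0" if "j < length \<beta>" for j using pos that by (auto dest: bspec[of _ _ "Suc j"])
    then have "hd \<beta> > 0" "\<forall>j\<in>{1..<length \<beta>}. \<beta> ! j > 0" using False by (auto simp: hd_conv_nth)
    then show ?thesis using False s by (auto simp: pseudo_comp_def)
  qed
next
  assume h: "(\<beta> = [] \<and> a = n) \<or> (\<beta> \<noteq> [] \<and> hd \<beta> > 0 \<and> pseudo_comp (n - a) \<beta> \<and> a \<le> n)"
  show "pseudo_comp n (a # \<beta>)"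
  proof (cases "\<beta> = []")
    case True then show ?thesis using h by (simp add: pseudo_comp_def)
  next
    case False
    then have hb: "hd \<beta> > 0" "pseudo_comp (n - a) \<beta>" "a \<le> n" using h by auto
    have "\<beta> ! j > 0" if "j < length \<beta>" for j
    proof (cases j)
      case 0 then show ?thesis using hb False by (simp add: hd_conv_nth)
    next
      case (Suc j') then show ?thesis using hb that by (auto simp: pseudo_comp_def)
    qed
    then have "\<forall>j\<in>{1..<length (a # \<beta>)}. (a # \<beta>) ! j > 0"
      by (auto simp: nth_Cons split: nat.splits)
    then show ?thesis using hb by (auto simp: pseudo_comp_def)
  qed
qed

lemma dc_nonempty:
  assumes "\<beta> \<noteq> []" shows "a \<in> desc_comp (a # \<beta>)"
  using dc_cons[OF assms, of a] by auto

lemma dc_min: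
  assumes "\<beta> \<noteq> []" "s \<in> desc_comp (a # \<beta>)" shows "a \<le> s"
  using dc_cons[OF assms(1), of a] assms(2) by auto

lemma dc_inj:
  assumes "pseudo_comp n \<alpha>" "pseudo_comp n \<alpha>'" "desc_comp \<alpha> = desc_comp \<alpha>'"
  shows "\<alpha> = \<alpha>'"
  using assms
proof (induction \<alpha> arbitrary: n \<alpha>')
  case Nil then show ?case by (simp add: pseudo_comp_def)
next
  case (Cons a \<beta>)
  obtain a' \<beta>' where a': "\<alpha>' = a' # \<beta>'" using Cons.prems(2) by (cases \<alpha>') (auto simp: pseudo_comp_def)
  show ?case
  proof (cases "\<beta> = []")
    case True
    then have "desc_comp \<alpha>' = {}" using Cons.prems(3) dc_single by simp
    then have "\<beta>' = []" using a' dc_nonempty by blast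
    then show ?thesis using True a' Cons.prems by (simp add: pc_cons)
  next
    case False
    have "\<beta>' \<noteq> []"
    proof
      assume "\<beta>' = []"
      then have "desc_comp (a # \<beta>) = {}" using Cons.prems(3) a' dc_single by simp
      then show False using dc_nonempty[OF False] by blast
    qed
    note F' = this
    have aa: "a = a'"
    proof -
      have "a \<in> desc_comp (a # \<beta>)" by (rule dc_nonempty[OF False])
      then have "a \<in> desc_comp (a' # \<beta>')" using Cons.prems(3) a' by simp
      then have "a' \<le> a" using dc_min[OF F'] by blast
      moreover have "a' \<in> desc_comp (a' # \<beta>')" by (rule dc_nonempty[OF F'])
      then have "a' \<in> desc_comp (a # \<beta>)" using Cons.prems(3) a' by simp
      then have "a \<le> a'" using dc_min[OF False] by blast
      ultimately show ?thesis by simp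
    qed
    have pb: "hd \<beta> > 0" "pseudo_comp (n - a) \<beta>" using Cons.prems(1) False by (auto simp: pc_cons)
    have pb': "hd \<beta>' > 0" "pseudo_comp (n - a) \<beta>'" using Cons.prems(2) F' a' aa by (auto simp: pc_cons)
    have "(\<lambda>s. a + s) ` insert 0 (desc_comp \<beta>) = (\<lambda>s. a + s) ` insert 0 (desc_comp \<beta>')"
      using Cons.prems(3) a' aa dc_cons[OF False] dc_cons[OF F'] by simp
    then have "insert 0 (desc_comp \<beta>) = insert 0 (desc_comp \<beta>')"
      by (rule inj_image_eq_iff[THEN iffD1, rotated]) (simp add: inj_def)
    moreover have "0 \<notin> desc_comp \<beta>" using dc_pos[OF False pb(1)] pb(1) by force
    moreover have "0 \<notin> desc_comp \<beta>'" using dc_pos[OF F' pb'(1)] pb'(1) by force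
    ultimately have "desc_comp \<beta> = desc_comp \<beta>'" by (simp add: insert_ident)
    then have "\<beta> = \<beta>'" using Cons.IH pb(2) pb'(2) by blast
    then show ?thesis using a' aa by simp
  qed
qed

lemma dc_sub:
  assumes "pseudo_comp n \<alpha>" shows "desc_comp \<alpha> \<subseteq> {0..<n}"
  using assms
proof (induction \<alpha> arbitrary: n)
  case Nil then show ?case by (simp add: pseudo_comp_def)
next
  case (Cons a \<beta>)
  show ?case
  proof (cases "\<beta> = []")
    case True then show ?thesis by (simp add: dc_single)
  next
    case False
    have pb: "hd \<beta> > 0" "pseudo_comp (n - a) \<beta>" "a \<le> n" using Cons.prems False by (auto simp: pc_cons)
    have IH: "desc_comp \<beta> \<subseteq> {0..<n - a}" using Cons.IH pb(2) .
    have "n - a > 0"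
    proof -
      have "sum_list \<beta> \<ge> hd \<beta>" using False by (cases \<beta>) auto
      then show ?thesis using pb by (auto simp: pseudo_comp_def)
    qed
    then show ?thesis using IH dc_cons[OF False, of a] pb by auto
  qed
qed

lemma dc_surj:
  assumes "S \<subseteq> {0..<n}"
  shows "\<exists>\<alpha>. pseudo_comp n \<alpha> \<and> desc_comp \<alpha> = S"
  using assms
proof (induction "card S" arbitrary: S n rule: less_induct)
  case less
  show ?case
  proof (cases "S = {}")
    case True
    then show ?thesis by (intro exI[of _ "[n]"]) (simp add: pseudo_comp_def dc_single)
  next
    case False
    have finS: "finite S" using less.prems finite_subset by blast
    define a where "a = Min S"
    have aS: "a \<in> S" using Min_in[OF finS False] a_def by simp
    have amin: "\<And>s. s \<in> S \<Longrightarrow> a \<le> s" using Min_le[OF finS] a_def by simp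
    have an: "a < n" using aS less.prems by auto
    define S' where "S' = (\<lambda>s. s - a) ` (S - {a})"
    have S'sub: "S' \<subseteq> {0..<n - a}" using less.prems amin unfolding S'_def by force
    have S'pos: "0 \<notin> S'" using amin unfolding S'_def by force
    have "card S' \<le> card (S - {a})" unfolding S'_def using finS by (intro card_image_le) auto
    also have "\<dots> < card S" by (rule card_Diff1_less[OF finS aS])
    finally obtain \<beta> where \<beta>: "pseudo_comp (n - a) \<beta>" "desc_comp \<beta> = S'"
      using less.hyps S'sub by blast
    have bne: "\<beta> \<noteq> []" using \<beta> by (simp add: pseudo_comp_def)
    have hdpos: "hd \<beta> > 0"
    proof (cases "length \<beta> \<ge> 2")
      case True
      then show ?thesis using dc_mem_hd[OF True] \<beta>(2) S'pos by (cases "hd \<beta>") auto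
    next
      case False
      obtain b bs where bb: "\<beta> = b # bs" using bne by (cases \<beta>) auto
      then have "bs = []" using False by (cases bs) auto
      then have "\<beta> = [b]" using bb by simp
      then show ?thesis using \<beta>(1) an by (simp add: pseudo_comp_def)
    qed
    have pc: "pseudo_comp n (a # \<beta>)" using bne hdpos \<beta>(1) an by (simp add: pc_cons)
    have "desc_comp (a # \<beta>) = (\<lambda>s. a + s) ` insert 0 S'" using dc_cons[OF bne] \<beta>(2) by simp
    also have "\<dots> = S"
    proof -
      have "(\<lambda>s. a + s) ` S' = (\<lambda>s. a + (s - a)) ` (S - {a})" unfolding S'_def image_image ..
      also have "\<dots> = (\<lambda>s. s) ` (S - {a})" using amin by (intro image_cong) auto
      finally have "(\<lambda>s. a + s) ` S' = S - {a}" by simp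
      then show ?thesis using aS by auto
    qed
    finally show ?thesis using pc by blast
  qed
qed

lemma dc_bij: "bij_betw desc_comp {\<alpha>. pseudo_comp n \<alpha>} (Pow {0..<n})"
  unfolding bij_betw_def
proof
  show "inj_on desc_comp {\<alpha>. pseudo_comp n \<alpha>}" using dc_inj by (auto intro: inj_onI)
  show "desc_comp ` {\<alpha>. pseudo_comp n \<alpha>} = Pow {0..<n}"
  proof
    show "desc_comp ` {\<alpha>. pseudo_comp n \<alpha>} \<subseteq> Pow {0..<n}" using dc_sub by auto
    show "Pow {0..<n} \<subseteq> desc_comp ` {\<alpha>. pseudo_comp n \<alpha>}"
    proof
      fix S assume "S \<in> Pow {0..<n}"
      then obtain \<alpha> where "pseudo_comp n \<alpha>" "desc_comp \<alpha> = S" using dc_surj by blast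
      then show "S \<in> desc_comp ` {\<alpha>. pseudo_comp n \<alpha>}" by blast
    qed
  qed
qed

lemma relab_exists:
  assumes A: "A \<subseteq> {1..n}" and B: "B \<subseteq> {1..n}" and c: "card A = card B"
  obtains \<rho> where "relab n \<rho> A B"
proof -
  have fA: "finite A" "finite B" using A B finite_subset by auto
  obtain h1 where h1: "bij_betw h1 A B" "strict_mono_on A h1" using mono_bij_exists[OF fA c] by blast
  have c2: "card ({1..n} - A) = card ({1..n} - B)" using A B c fA by (simp add: card_Diff_subset)
  obtain h2 where h2: "bij_betw h2 ({1..n} - A) ({1..n} - B)" "strict_mono_on ({1..n} - A) h2"
    using mono_bij_exists[OF _ _ c2] by blast
  define \<rho> where "\<rho> a = (if a \<in> A then h1 a else h2 a)" for a
  have b1: "bij_betw \<rho> A B" using h1(1) by (rule bij_betw_cong[THEN iffD1, rotated]) (simp add: \<rho>_def)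
  have b2: "bij_betw \<rho> ({1..n} - A) ({1..n} - B)" using h2(1)
    by (rule bij_betw_cong[THEN iffD1, rotated]) (simp add: \<rho>_def)
  have "bij_betw \<rho> (A \<union> ({1..n} - A)) (B \<union> ({1..n} - B))"
    using bij_betw_combine[OF b1 b2] by auto
  moreover have "A \<union> ({1..n} - A) = {1..n}" "B \<union> ({1..n} - B) = {1..n}" using A B by auto
  ultimately have bij: "bij_betw \<rho> {1..n} {1..n}" by simp
  have m1: "strict_mono_on A \<rho>" using h1(2) by (auto simp: strict_mono_on_def \<rho>_def)
  have m2: "strict_mono_on ({1..n} - A) \<rho>" using h2(2) by (auto simp: strict_mono_on_def \<rho>_def)
  have "\<rho> ` A = B" using b1 by (simp add: bij_betw_def)
  then have "relab n \<rho> A B" using bij A m1 m2 by (simp add: relab_def)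
  then show ?thesis using that by blast
qed

lemma cls_card_eq:
  assumes A: "A \<subseteq> {1..n}" and B: "B \<subseteq> {1..n}" and c: "card A = card B"
    and xT: "x \<in> T" and x: "2 \<le> x" "x < n"
  shows "card (cls n T x A) = card (cls n T x B)"
proof (rule antisym)
  obtain \<rho> where "relab n \<rho> A B" using relab_exists[OF A B c] by blast
  then show "card (cls n T x A) \<le> card (cls n T x B)" using relab.cls_le[OF _ xT x] by blast
next
  obtain \<rho> where "relab n \<rho> B A" using relab_exists[OF B A c[symmetric]] by blast
  then show "card (cls n T x B) \<le> card (cls n T x A)" using relab.cls_le[OF _ xT x] by blast
qed

definition bb :: "nat \<Rightarrow> nat set \<Rightarrow> nat" where
  "bb n T = card {w \<in> even_signed_perms n. descD n w \<subseteq> T}"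

lemma bb_eq:
  assumes xT: "x \<in> T" and x: "2 \<le> x" "x < n"
  shows "bb n T = (n choose x) * card (cls n T x {1..x})"
proof -
  define Sub where "Sub = {A. A \<subseteq> {1..n} \<and> card A = x}"
  have finSub: "finite Sub" unfolding Sub_def by (rule finite_subset[of _ "Pow {1..n}"]) auto
  have img: "(\<lambda>i. nat \<bar>w i\<bar>) ` {1..int x} \<in> Sub" if w: "w \<in> signed_perms n" for w
  proof -
    have inj: "inj_on (\<lambda>i. nat \<bar>w i\<bar>) {1..int x}"
    proof (rule inj_onI)
      fix i j assume i: "i \<in> {1..int x}" and j: "j \<in> {1..int x}" and eq: "nat \<bar>w i\<bar> = nat \<bar>w j\<bar>"
      have "i \<in> signed_set n" "j \<in> signed_set n" using i j x by (auto simp: signed_set_def)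
      moreover have "\<bar>w i\<bar> = \<bar>w j\<bar>" using eq by simp
      ultimately have "\<bar>i\<bar> = \<bar>j\<bar>" using sp_abs_inj[OF w] by blast
      then show "i = j" using i j by auto
    qed
    have "card ((\<lambda>i. nat \<bar>w i\<bar>) ` {1..int x}) = x" using card_image[OF inj] by simp
    moreover have "(\<lambda>i. nat \<bar>w i\<bar>) ` {1..int x} \<subseteq> {1..n}"
    proof
      fix y assume "y \<in> (\<lambda>i. nat \<bar>w i\<bar>) ` {1..int x}"
      then obtain i where i: "i \<in> {1..int x}" "y = nat \<bar>w i\<bar>" by auto
      have "i \<in> signed_set n" using i x by (auto simp: signed_set_def)
      then have "w i \<in> signed_set n" using sp_maps[OF w] by simp
      then show "y \<in> {1..n}" using i by (auto simp: signed_set_def)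
    qed
    ultimately show ?thesis by (simp add: Sub_def)
  qed
  have eq: "{w \<in> even_signed_perms n. descD n w \<subseteq> T} = (\<Union>A\<in>Sub. cls n T x A)"
    using img esp_sp by (auto simp: cls_def)
  have "bb n T = card (\<Union>A\<in>Sub. cls n T x A)" unfolding bb_def eq ..
  also have "\<dots> = (\<Sum>A\<in>Sub. card (cls n T x A))"
  proof (rule card_UN_disjoint[OF finSub])
    show "\<forall>A\<in>Sub. finite (cls n T x A)"
    proof
      fix A show "finite (cls n T x A)" by (rule finite_subset[OF _ finite_esp]) (auto simp: cls_def)
    qed
    show "\<forall>A\<in>Sub. \<forall>B\<in>Sub. A \<noteq> B \<longrightarrow> cls n T x A \<inter> cls n T x B = {}"
      by (auto simp: cls_def)
  qed
  also have "\<dots> = (\<Sum>A\<in>Sub. card (cls n T x {1..x}))"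
  proof (rule sum.cong[OF refl])
    fix A assume "A \<in> Sub"
    then show "card (cls n T x A) = card (cls n T x {1..x})"
      using x by (intro cls_card_eq[OF _ _ _ xT x]) (auto simp: Sub_def)
  qed
  also have "\<dots> = card Sub * card (cls n T x {1..x})" by simp
  also have "card Sub = n choose x" unfolding Sub_def using n_subsets[of "{1..n}" x] by simp
  finally show ?thesis .
qed

lemma bb_dvd:
  assumes xT: "x \<in> T" and x: "2 \<le> x" "x < n" and p: "p dvd (n choose x)"
  shows "p dvd bb n T"
  using bb_eq[OF xT x] p by simp

lemma bb_sum:
  assumes "finite T"
  shows "bb n T = (\<Sum>S\<in>Pow T. rr n S)"
proof -
  have eq: "{w \<in> even_signed_perms n. descD n w \<subseteq> T} = (\<Union>S\<in>Pow T. {w \<in> even_signed_perms n. descD n w = S})"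
    by auto
  show ?thesis unfolding bb_def rr_def eq
  proof (rule card_UN_disjoint)
    show "finite (Pow T)" using assms by simp
    show "\<forall>S\<in>Pow T. finite {w \<in> even_signed_perms n. descD n w = S}"
      using finite_esp by auto
  qed auto
qed

lemma toggle_dvd:
  assumes x: "2 \<le> x" "x < n" and p: "p dvd (n choose x)"
  shows "T \<subseteq> {0..<n} - {x} \<Longrightarrow> p dvd (rr n T + rr n (insert x T))"
proof (induction "card T" arbitrary: T rule: less_induct)
  case less
  have finT: "finite T" using less.prems finite_subset by blast
  have xT: "x \<notin> T" using less.prems by auto
  define f where "f S = rr n S + rr n (insert x S)" for S
  have "bb n (insert x T) = (\<Sum>S\<in>Pow (insert x T). rr n S)" using bb_sum finT by simp
  also have "\<dots> = (\<Sum>S\<in>Pow T. rr n S) + (\<Sum>S\<in>insert x ` Pow T. rr n S)"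
    unfolding Pow_insert
  proof (rule sum.union_disjoint)
    show "finite (Pow T)" "finite (insert x ` Pow T)" using finT by auto
    show "Pow T \<inter> insert x ` Pow T = {}" using xT by auto
  qed
  also have "(\<Sum>S\<in>insert x ` Pow T. rr n S) = (\<Sum>S\<in>Pow T. rr n (insert x S))"
  proof (rule sum.reindex[unfolded comp_def])
    show "inj_on (insert x) (Pow T)"
    proof (rule inj_onI)
      fix A B assume A: "A \<in> Pow T" and B: "B \<in> Pow T" and e: "insert x A = insert x B"
      have "A = insert x A - {x}" "B = insert x B - {x}" using A B xT by auto
      then show "A = B" using e by simp
    qed
  qed
  finally have bsum: "bb n (insert x T) = (\<Sum>S\<in>Pow T. f S)" by (simp add: f_def sum.distrib)
  have "p dvd bb n (insert x T)" by (rule bb_dvd[OF _ x p]) simp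
  then have d1: "p dvd (\<Sum>S\<in>Pow T. f S)" using bsum by simp
  have "(\<Sum>S\<in>Pow T. f S) = f T + (\<Sum>S\<in>Pow T - {T}. f S)"
    using finT by (simp add: sum.remove[of "Pow T" T])
  moreover have "p dvd (\<Sum>S\<in>Pow T - {T}. f S)"
  proof (rule dvd_sum)
    fix S assume S: "S \<in> Pow T - {T}"
    then have "S \<subset> T" by auto
    then have "card S < card T" using finT by (simp add: psubset_card_mono)
    moreover have "S \<subseteq> {0..<n} - {x}" using S less.prems by auto
    ultimately show "p dvd f S" unfolding f_def using less.hyps by blast
  qed
  ultimately show ?case using d1 unfolding f_def by (simp add: dvd_add_left_iff)
qed

definition Cp :: "nat \<Rightarrow> nat \<Rightarrow> nat set" where
  "Cp n p = {x \<in> {2..<n}. p dvd (n choose x)}"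

definition RR :: "nat \<Rightarrow> nat set \<Rightarrow> int" where
  "RR n S = int (rr n S)"

definition cnt :: "nat \<Rightarrow> nat \<Rightarrow> int \<Rightarrow> nat" where
  "cnt n p i = card {S \<in> Pow {0..<n}. [RR n S = i] (mod int p)}"

definition tog :: "nat \<Rightarrow> nat set \<Rightarrow> nat set" where
  "tog x S = (if x \<in> S then S - {x} else insert x S)"

lemma tog_tog: "tog x (tog x S) = S"
  by (auto simp: tog_def)

lemma finite_Cp: "finite (Cp n p)" by (simp add: Cp_def)

lemma Cp_sub: "Cp n p \<subseteq> {0..<n}" by (auto simp: Cp_def)

lemma tog_cong:
  assumes x: "x \<in> Cp n p" and S: "S \<subseteq> {0..<n}" "x \<notin> S"
  shows "[RR n (insert x S) = - RR n S] (mod int p)"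
proof -
  have x2: "2 \<le> x" "x < n" "p dvd (n choose x)" using x by (auto simp: Cp_def)
  have "p dvd (rr n S + rr n (insert x S))" using toggle_dvd[OF x2] S by auto
  then have "int p dvd (int (rr n S) + int (rr n (insert x S)))"
    by (metis int_dvd_int_iff of_nat_add)
  then have "int p dvd (RR n (insert x S) - (- RR n S))" by (simp add: RR_def add.commute)
  then show ?thesis by (simp add: cong_iff_dvd_diff)
qed

lemma tog_cong2:
  assumes x: "x \<in> Cp n p" and S: "S \<subseteq> {0..<n}"
  shows "[RR n (tog x S) = - RR n S] (mod int p)"
proof (cases "x \<in> S")
  case False
  then show ?thesis using tog_cong[OF x S False] by (simp add: tog_def)
next
  case True
  have S': "S - {x} \<subseteq> {0..<n}" "x \<notin> S - {x}" using S by auto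
  have "insert x (S - {x}) = S" using True by auto
  then have "[RR n S = - RR n (S - {x})] (mod int p)" using tog_cong[OF x S'] by simp
  then have "[- RR n S = RR n (S - {x})] (mod int p)"
    by (metis cong_minus_minus_iff minus_minus)
  then show ?thesis using True by (simp add: tog_def cong_sym)
qed

lemma sign_cong:
  assumes U: "U \<subseteq> {0..<n} - Cp n p"
  shows "Y \<subseteq> Cp n p \<Longrightarrow> [RR n (U \<union> Y) = (-1) ^ card Y * RR n U] (mod int p)"
proof (induction Y rule: infinite_finite_induct)
  case (infinite Y)
  then show ?case using finite_subset[OF _ finite_Cp] by blast
next
  case empty then show ?case by simp
next
  case (insert y Y)
  have yC: "y \<in> Cp n p" and YC: "Y \<subseteq> Cp n p" using insert.prems by auto
  have sub: "U \<union> Y \<subseteq> {0..<n}" using U YC Cp_sub by blast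
  have ny: "y \<notin> U \<union> Y" using insert.hyps U yC by auto
  have "[RR n (insert y (U \<union> Y)) = - RR n (U \<union> Y)] (mod int p)" using tog_cong[OF yC sub ny] .
  moreover have "[- RR n (U \<union> Y) = - ((-1) ^ card Y * RR n U)] (mod int p)"
    using insert.IH[OF YC] by (simp add: cong_minus_minus_iff)
  ultimately have "[RR n (insert y (U \<union> Y)) = - ((-1) ^ card Y * RR n U)] (mod int p)"
    by (rule cong_trans)
  then show ?case using insert.hyps by simp
qed

lemma split_sum:
  fixes g :: "nat set \<Rightarrow> nat"
  assumes fin: "finite Q" and q0: "q \<in> Q" and sym: "\<And>U. U \<subseteq> Q \<Longrightarrow> g (Q - U) = g U"
  shows "(\<Sum>U\<in>Pow Q. g U) = 2 * (\<Sum>U\<in>{U \<in> Pow Q. q \<notin> U}. g U)"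
proof -
  have eq: "Pow Q = {U \<in> Pow Q. q \<notin> U} \<union> {U \<in> Pow Q. q \<in> U}" by auto
  have "(\<Sum>U\<in>Pow Q. g U) = (\<Sum>U\<in>{U \<in> Pow Q. q \<notin> U}. g U) + (\<Sum>U\<in>{U \<in> Pow Q. q \<in> U}. g U)"
    by (subst eq, rule sum.union_disjoint) (use fin in auto)
  moreover have "bij_betw (\<lambda>U. Q - U) {U \<in> Pow Q. q \<notin> U} {U \<in> Pow Q. q \<in> U}"
    by (rule bij_betw_byWitness[where f'="\<lambda>U. Q - U"]) (use q0 in auto)
  then have "(\<Sum>U\<in>{U \<in> Pow Q. q \<notin> U}. g (Q - U)) = (\<Sum>U\<in>{U \<in> Pow Q. q \<in> U}. g U)"
    by (rule sum.reindex_bij_betw)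
  moreover have "(\<Sum>U\<in>{U \<in> Pow Q. q \<notin> U}. g (Q - U)) = (\<Sum>U\<in>{U \<in> Pow Q. q \<notin> U}. g U)"
    using sym by (intro sum.cong) auto
  ultimately show ?thesis by simp
qed

lemma cnt_decomp:
  "cnt n p i = (\<Sum>U\<in>Pow ({0..<n} - Cp n p). card {Y \<in> Pow (Cp n p). [RR n (U \<union> Y) = i] (mod int p)})"
proof -
  define Q where "Q = {0..<n} - Cp n p"
  define C where "C = Cp n p"
  have CQ: "C \<inter> Q = {}" "Q \<union> C = {0..<n}" using Cp_sub unfolding Q_def C_def by auto
  have finC: "finite C" unfolding C_def by (rule finite_Cp)
  have finQ: "finite Q" unfolding Q_def by simp
  define F where "F U = {Y \<in> Pow C. [RR n (U \<union> Y) = i] (mod int p)}" for U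
  have eq: "{S \<in> Pow {0..<n}. [RR n S = i] (mod int p)} = (\<Union>U\<in>Pow Q. (\<lambda>Y. U \<union> Y) ` F U)"
  proof (intro set_eqI iffI)
    fix S assume S: "S \<in> {S \<in> Pow {0..<n}. [RR n S = i] (mod int p)}"
    have "S = (S \<inter> Q) \<union> (S \<inter> C)" using S CQ by auto
    moreover have "S \<inter> Q \<in> Pow Q" "S \<inter> C \<in> F (S \<inter> Q)"
      using S calculation unfolding F_def by auto
    ultimately show "S \<in> (\<Union>U\<in>Pow Q. (\<lambda>Y. U \<union> Y) ` F U)" by blast
  next
    fix S assume "S \<in> (\<Union>U\<in>Pow Q. (\<lambda>Y. U \<union> Y) ` F U)"
    then obtain U Y where "U \<in> Pow Q" "Y \<in> F U" "S = U \<union> Y" by auto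
    then show "S \<in> {S \<in> Pow {0..<n}. [RR n S = i] (mod int p)}" using CQ unfolding F_def by auto
  qed
  have inj: "inj_on (\<lambda>Y. U \<union> Y) (F U)" if "U \<in> Pow Q" for U
  proof (rule inj_onI)
    fix Y Y' assume "Y \<in> F U" "Y' \<in> F U" "U \<union> Y = U \<union> Y'"
    moreover have "Y = (U \<union> Y) \<inter> C" "Y' = (U \<union> Y') \<inter> C" using calculation that CQ unfolding F_def by auto
    ultimately show "Y = Y'" by simp
  qed
  have "cnt n p i = card (\<Union>U\<in>Pow Q. (\<lambda>Y. U \<union> Y) ` F U)" unfolding cnt_def eq ..
  also have "\<dots> = (\<Sum>U\<in>Pow Q. card ((\<lambda>Y. U \<union> Y) ` F U))"
  proof (rule card_UN_disjoint)
    show "finite (Pow Q)" using finQ by simp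
    show "\<forall>U\<in>Pow Q. finite ((\<lambda>Y. U \<union> Y) ` F U)" using finC unfolding F_def by auto
    show "\<forall>U\<in>Pow Q. \<forall>U'\<in>Pow Q. U \<noteq> U' \<longrightarrow> (\<lambda>Y. U \<union> Y) ` F U \<inter> (\<lambda>Y. U' \<union> Y) ` F U' = {}"
    proof (intro ballI impI)
      fix U U' assume U: "U \<in> Pow Q" and U': "U' \<in> Pow Q" and ne: "U \<noteq> U'"
      show "(\<lambda>Y. U \<union> Y) ` F U \<inter> (\<lambda>Y. U' \<union> Y) ` F U' = {}"
      proof (rule ccontr)
        assume "(\<lambda>Y. U \<union> Y) ` F U \<inter> (\<lambda>Y. U' \<union> Y) ` F U' \<noteq> {}"
        then obtain Y Y' where Y: "Y \<in> F U" "Y' \<in> F U'" and e: "U \<union> Y = U' \<union> Y'" by blast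
        have "U = (U \<union> Y) \<inter> Q" "U' = (U' \<union> Y') \<inter> Q" using U U' Y CQ unfolding F_def by auto
        then show False using e ne by simp
      qed
    qed
  qed
  also have "\<dots> = (\<Sum>U\<in>Pow Q. card (F U))"
    using inj by (intro sum.cong refl card_image)
  finally show ?thesis unfolding F_def Q_def C_def .
qed

lemma ev_od:
  fixes C :: "nat set"
  assumes x0: "x0 \<in> C" and fin: "finite C"
  shows "card {Y \<in> Pow C. even (card Y)} = card {Y \<in> Pow C. odd (card Y)}"
    and "2 * card {Y \<in> Pow C. even (card Y)} = 2 ^ card C"
proof -
  have finY: "finite Y" if "Y \<in> Pow C" for Y using fin that finite_subset by auto
  have par: "odd (card (tog x0 Y)) \<longleftrightarrow> even (card Y)" if "Y \<in> Pow C" for Y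
  proof (cases "x0 \<in> Y")
    case True
    then have "card (tog x0 Y) = card Y - 1" "card Y > 0" using finY[OF that] by (auto simp: tog_def card_gt_0_iff)
    then show ?thesis by auto
  next
    case False
    then have "card (tog x0 Y) = Suc (card Y)" using finY[OF that] by (simp add: tog_def)
    then show ?thesis by auto
  qed
  have togC: "tog x0 Y \<in> Pow C" if "Y \<in> Pow C" for Y using that x0 by (auto simp: tog_def)
  have "bij_betw (tog x0) {Y \<in> Pow C. even (card Y)} {Y \<in> Pow C. odd (card Y)}"
  proof (rule bij_betw_byWitness[where f'="tog x0"])
    show "\<forall>a\<in>{Y \<in> Pow C. even (card Y)}. tog x0 (tog x0 a) = a" by (simp add: tog_tog)
    show "\<forall>a\<in>{Y \<in> Pow C. odd (card Y)}. tog x0 (tog x0 a) = a" by (simp add: tog_tog)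
    show "tog x0 ` {Y \<in> Pow C. even (card Y)} \<subseteq> {Y \<in> Pow C. odd (card Y)}"
      using par togC by auto
    show "tog x0 ` {Y \<in> Pow C. odd (card Y)} \<subseteq> {Y \<in> Pow C. even (card Y)}"
    proof
      fix Z assume "Z \<in> tog x0 ` {Y \<in> Pow C. odd (card Y)}"
      then obtain Y where Y: "Y \<in> Pow C" "odd (card Y)" "Z = tog x0 Y" by auto
      have "Z \<in> Pow C" using togC Y by simp
      moreover have "odd (card (tog x0 Z)) \<longleftrightarrow> even (card Z)" using par calculation by blast
      moreover have "tog x0 Z = Y" using Y tog_tog by simp
      ultimately show "Z \<in> {Y \<in> Pow C. even (card Y)}" using Y by auto
    qed
  qed
  then show e: "card {Y \<in> Pow C. even (card Y)} = card {Y \<in> Pow C. odd (card Y)}"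
    by (rule bij_betw_same_card)
  have "Pow C = {Y \<in> Pow C. even (card Y)} \<union> {Y \<in> Pow C. odd (card Y)}" by auto
  then have "card (Pow C) = card {Y \<in> Pow C. even (card Y)} + card {Y \<in> Pow C. odd (card Y)}"
    using fin by (metis (no_types, lifting) card_Un_disjoint disjoint_iff finite_Pow_iff finite_subset mem_Collect_eq subsetI)
  then show "2 * card {Y \<in> Pow C. even (card Y)} = 2 ^ card C" using e fin by (simp add: card_Pow)
qed

definition hh :: "nat \<Rightarrow> int \<Rightarrow> int \<Rightarrow> nat" where
  "hh p i a = (if [a = i] (mod int p) then 1 else 0) + (if [- a = i] (mod int p) then 1 else 0)"

lemma hh_neg: "hh p i (- a) = hh p i a"
  by (simp add: hh_def)

lemma hh_cong: "[a = b] (mod int p) \<Longrightarrow> hh p i a = hh p i b"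
proof -
  assume c: "[a = b] (mod int p)"
  have "[a = i] (mod int p) \<longleftrightarrow> [b = i] (mod int p)" using c by (meson cong_sym cong_trans)
  moreover have "[- a = - b] (mod int p)" using c by (simp add: cong_minus_minus_iff)
  then have "[- a = i] (mod int p) \<longleftrightarrow> [- b = i] (mod int p)" by (meson cong_sym cong_trans)
  ultimately show ?thesis by (simp add: hh_def)
qed

lemma hh_zero:
  assumes "[i = 0] (mod int p)"
  shows "hh p i a = 2 * (if [a = i] (mod int p) then 1 else 0)"
proof -
  have "[a = i] (mod int p) \<longleftrightarrow> [a = 0] (mod int p)" using assms by (meson cong_sym cong_trans)
  moreover have "[- a = i] (mod int p) \<longleftrightarrow> [- a = 0] (mod int p)" using assms by (meson cong_sym cong_trans)
  moreover have "[- a = 0] (mod int p) \<longleftrightarrow> [a = 0] (mod int p)" by (simp add: cong_0_iff)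
  ultimately show ?thesis by (simp add: hh_def)
qed

lemma card_filter_sum: "finite A \<Longrightarrow> card {x \<in> A. P x} = (\<Sum>x\<in>A. if P x then 1 else 0)"
  by (simp add: sum.inter_filter[symmetric])

lemma cnt_formula:
  assumes x0: "x0 \<in> Cp n p"
  shows "cnt n p i = (\<Sum>U\<in>Pow ({0..<n} - Cp n p). card {Y \<in> Pow (Cp n p). even (card Y)} * hh p i (RR n U))"
proof -
  define C where "C = Cp n p"
  define E where "E = card {Y \<in> Pow C. even (card Y)}"
  have finC: "finite C" unfolding C_def by (rule finite_Cp)
  have EO: "card {Y \<in> Pow C. odd (card Y)} = E" using ev_od(1)[OF x0[folded C_def] finC] E_def by simp
  have "card {Y \<in> Pow C. [RR n (U \<union> Y) = i] (mod int p)} = E * hh p i (RR n U)"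
    if U: "U \<in> Pow ({0..<n} - C)" for U
  proof -
    have "{Y \<in> Pow C. [RR n (U \<union> Y) = i] (mod int p)} = {Y \<in> Pow C. [(-1) ^ card Y * RR n U = i] (mod int p)}"
    proof (intro Collect_cong conj_cong refl)
      fix Y assume "Y \<in> Pow C"
      then have "[RR n (U \<union> Y) = (-1) ^ card Y * RR n U] (mod int p)"
        using sign_cong[of U n p Y] U unfolding C_def by auto
      then show "[RR n (U \<union> Y) = i] (mod int p) \<longleftrightarrow> [(-1) ^ card Y * RR n U = i] (mod int p)"
        by (meson cong_sym cong_trans)
    qed
    also have "\<dots> = {Y \<in> Pow C. even (card Y) \<and> [RR n U = i] (mod int p)} \<union>
                    {Y \<in> Pow C. odd (card Y) \<and> [- RR n U = i] (mod int p)}"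
    proof (intro set_eqI)
      fix Y
      show "Y \<in> {Y \<in> Pow C. [(-1) ^ card Y * RR n U = i] (mod int p)} \<longleftrightarrow>
         Y \<in> {Y \<in> Pow C. even (card Y) \<and> [RR n U = i] (mod int p)} \<union>
                    {Y \<in> Pow C. odd (card Y) \<and> [- RR n U = i] (mod int p)}"
        by (cases "even (card Y)") auto
    qed
    finally have eq: "{Y \<in> Pow C. [RR n (U \<union> Y) = i] (mod int p)} =
       {Y \<in> Pow C. even (card Y) \<and> [RR n U = i] (mod int p)} \<union>
       {Y \<in> Pow C. odd (card Y) \<and> [- RR n U = i] (mod int p)}" .
    have c1: "card {Y \<in> Pow C. even (card Y) \<and> [RR n U = i] (mod int p)} = (if [RR n U = i] (mod int p) then E else 0)"
      unfolding E_def by auto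
    have c2: "card {Y \<in> Pow C. odd (card Y) \<and> [- RR n U = i] (mod int p)} = (if [- RR n U = i] (mod int p) then E else 0)"
      using EO by auto
    have "card {Y \<in> Pow C. [RR n (U \<union> Y) = i] (mod int p)} =
       card {Y \<in> Pow C. even (card Y) \<and> [RR n U = i] (mod int p)} +
       card {Y \<in> Pow C. odd (card Y) \<and> [- RR n U = i] (mod int p)}"
      unfolding eq by (rule card_Un_disjoint) (use finC in auto)
    then show ?thesis using c1 c2 by (simp add: hh_def)
  qed
  then show ?thesis using cnt_decomp[of n p i] unfolding C_def E_def by simp
qed

lemma hh_sym:
  assumes n2: "2 \<le> n" and U: "U \<subseteq> {0..<n} - Cp n p"
  shows "hh p i (RR n ({0..<n} - Cp n p - U)) = hh p i (RR n U)"
proof -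
  define Q where "Q = {0..<n} - Cp n p"
  have "U \<subseteq> {0..<n}" using U by auto
  then have "RR n U = RR n ({0..<n} - U)" using rr_compl[of U n] n2 by (simp add: RR_def)
  also have "{0..<n} - U = (Q - U) \<union> Cp n p" using U Cp_sub unfolding Q_def by auto
  finally have e: "RR n U = RR n ((Q - U) \<union> Cp n p)" .
  have "[RR n ((Q - U) \<union> Cp n p) = (-1) ^ card (Cp n p) * RR n (Q - U)] (mod int p)"
    by (rule sign_cong) (auto simp: Q_def)
  then have "hh p i (RR n U) = hh p i ((-1) ^ card (Cp n p) * RR n (Q - U))" using e hh_cong by simp
  also have "\<dots> = hh p i (RR n (Q - U))" by (cases "even (card (Cp n p))") (auto simp: hh_neg)
  finally show ?thesis unfolding Q_def by simp
qed

lemma cnt_dvd: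
  assumes n2: "2 \<le> n" and x0: "x0 \<in> Cp n p"
  shows "2 ^ card (Cp n p) dvd cnt n p i"
    and "[i = 0] (mod int p) \<Longrightarrow> 2 ^ Suc (card (Cp n p)) dvd cnt n p i"
proof -
  define Q where "Q = {0..<n} - Cp n p"
  define E where "E = card {Y \<in> Pow (Cp n p). even (card Y)}"
  define A0 where "A0 = {U \<in> Pow Q. 0 \<notin> U}"
  have E2: "2 * E = 2 ^ card (Cp n p)" using ev_od(2)[OF x0 finite_Cp] E_def by simp
  have q0: "0 \<in> Q" using n2 unfolding Q_def by (auto simp: Cp_def)
  have fQ: "finite Q" unfolding Q_def by simp
  have "(\<Sum>U\<in>Pow Q. hh p i (RR n U)) = 2 * (\<Sum>U\<in>A0. hh p i (RR n U))"
    unfolding A0_def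
    by (rule split_sum[OF fQ q0]) (use hh_sym[OF n2] in \<open>auto simp: Q_def\<close>)
  moreover have "cnt n p i = E * (\<Sum>U\<in>Pow Q. hh p i (RR n U))"
    using cnt_formula[OF x0, of i] unfolding Q_def E_def by (simp add: sum_distrib_left)
  ultimately have c: "cnt n p i = 2 ^ card (Cp n p) * (\<Sum>U\<in>A0. hh p i (RR n U))"
    using E2 by (metis mult.assoc mult.commute)
  then show "2 ^ card (Cp n p) dvd cnt n p i" by simp
  assume i0: "[i = 0] (mod int p)"
  have "(\<Sum>U\<in>A0. hh p i (RR n U)) = 2 * (\<Sum>U\<in>A0. (if [RR n U = i] (mod int p) then 1 else 0))"
    using hh_zero[OF i0] by (simp add: sum_distrib_left)
  then show "2 ^ Suc (card (Cp n p)) dvd cnt n p i" using c by simp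
qed

lemma cnt_even:
  assumes n2: "2 \<le> n"
  shows "2 dvd cnt n p i"
proof -
  have "cnt n p i = (\<Sum>S\<in>Pow {0..<n}. if [RR n S = i] (mod int p) then 1 else 0)"
    unfolding cnt_def by (rule card_filter_sum) simp
  also have "\<dots> = 2 * (\<Sum>S\<in>{S \<in> Pow {0..<n}. 0 \<notin> S}. if [RR n S = i] (mod int p) then 1 else 0)"
    by (rule split_sum) (use n2 rr_compl[OF _ n2] in \<open>auto simp: RR_def\<close>)
  finally show ?thesis by simp
qed

lemma cnt_sym:
  assumes x0: "x0 \<in> Cp n p"
  shows "cnt n p i = cnt n p (- i)"
proof -
  have "bij_betw (tog x0) {S \<in> Pow {0..<n}. [RR n S = i] (mod int p)} {S \<in> Pow {0..<n}. [RR n S = - i] (mod int p)}"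
  proof (rule bij_betw_byWitness[where f'="tog x0"])
    have x0n: "x0 \<in> {0..<n}" using x0 Cp_sub by blast
    have tp: "tog x0 S \<in> Pow {0..<n}" if "S \<in> Pow {0..<n}" for S using that x0n by (auto simp: tog_def)
    show "\<forall>a\<in>{S \<in> Pow {0..<n}. [RR n S = i] (mod int p)}. tog x0 (tog x0 a) = a" by (simp add: tog_tog)
    show "\<forall>a\<in>{S \<in> Pow {0..<n}. [RR n S = - i] (mod int p)}. tog x0 (tog x0 a) = a" by (simp add: tog_tog)
    show "tog x0 ` {S \<in> Pow {0..<n}. [RR n S = i] (mod int p)} \<subseteq> {S \<in> Pow {0..<n}. [RR n S = - i] (mod int p)}"
    proof
      fix Z assume "Z \<in> tog x0 ` {S \<in> Pow {0..<n}. [RR n S = i] (mod int p)}"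
      then obtain S where S: "S \<in> Pow {0..<n}" "[RR n S = i] (mod int p)" "Z = tog x0 S" by auto
      have "[RR n Z = - RR n S] (mod int p)" using tog_cong2[OF x0, of S] S by auto
      moreover have "[- RR n S = - i] (mod int p)" using S(2) by (simp add: cong_minus_minus_iff)
      ultimately have "[RR n Z = - i] (mod int p)" by (rule cong_trans)
      then show "Z \<in> {S \<in> Pow {0..<n}. [RR n S = - i] (mod int p)}" using tp S by auto
    qed
    show "tog x0 ` {S \<in> Pow {0..<n}. [RR n S = - i] (mod int p)} \<subseteq> {S \<in> Pow {0..<n}. [RR n S = i] (mod int p)}"
    proof
      fix Z assume "Z \<in> tog x0 ` {S \<in> Pow {0..<n}. [RR n S = - i] (mod int p)}"
      then obtain S where S: "S \<in> Pow {0..<n}" "[RR n S = - i] (mod int p)" "Z = tog x0 S" by auto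
      have "[RR n Z = - RR n S] (mod int p)" using tog_cong2[OF x0, of S] S by auto
      moreover have "[- RR n S = i] (mod int p)" using S(2) cong_minus_minus_iff[of "RR n S" "- i" "int p"] by simp
      ultimately have "[RR n Z = i] (mod int p)" by (rule cong_trans)
      then show "Z \<in> {S \<in> Pow {0..<n}. [RR n S = i] (mod int p)}" using tp S by auto
    qed
  qed
  then show ?thesis unfolding cnt_def by (rule bij_betw_same_card)
qed

lemma cD_eq: "cD p i n = cnt n p i"
proof -
  have bij: "bij_betw desc_comp {\<alpha>. pseudo_comp n \<alpha>} (Pow {0..<n})" by (rule dc_bij)
  have inj: "inj_on desc_comp {\<alpha>. pseudo_comp n \<alpha> \<and> [RR n (desc_comp \<alpha>) = i] (mod int p)}"
    using bij by (auto simp: bij_betw_def intro: inj_on_subset)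
  have img: "desc_comp ` {\<alpha>. pseudo_comp n \<alpha> \<and> [RR n (desc_comp \<alpha>) = i] (mod int p)}
      = {S \<in> Pow {0..<n}. [RR n S = i] (mod int p)}"
  proof
    show "desc_comp ` {\<alpha>. pseudo_comp n \<alpha> \<and> [RR n (desc_comp \<alpha>) = i] (mod int p)}
      \<subseteq> {S \<in> Pow {0..<n}. [RR n S = i] (mod int p)}" using bij by (auto simp: bij_betw_def)
    show "{S \<in> Pow {0..<n}. [RR n S = i] (mod int p)} \<subseteq>
      desc_comp ` {\<alpha>. pseudo_comp n \<alpha> \<and> [RR n (desc_comp \<alpha>) = i] (mod int p)}"
    proof
      fix S assume S: "S \<in> {S \<in> Pow {0..<n}. [RR n S = i] (mod int p)}"
      then have "S \<in> desc_comp ` {\<alpha>. pseudo_comp n \<alpha>}" using bij by (simp add: bij_betw_def)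
      then obtain \<alpha> where "pseudo_comp n \<alpha>" "S = desc_comp \<alpha>" by auto
      then show "S \<in> desc_comp ` {\<alpha>. pseudo_comp n \<alpha> \<and> [RR n (desc_comp \<alpha>) = i] (mod int p)}"
        using S by auto
    qed
  qed
  have "cD p i n = card {\<alpha>. pseudo_comp n \<alpha> \<and> [RR n (desc_comp \<alpha>) = i] (mod int p)}"
    by (simp add: cD_def rD_def RR_def rr_def)
  also have "\<dots> = card {S \<in> Pow {0..<n}. [RR n S = i] (mod int p)}"
    using card_image[OF inj] img by simp
  finally show ?thesis by (simp add: cnt_def)
qed

lemma Cp_bound:
  fixes p n k :: nat and d :: "nat \<Rightarrow> nat"
  assumes p: "prime p" and n4: "n \<ge> 4" and dlt: "\<And>j. j \<le> k \<Longrightarrow> d j < p"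
    and nd: "n = (\<Sum>j\<le>k. d j * p ^ j)"
  shows "n + (if d 0 > 0 then 1 else 0) \<le> card (Cp n p) + (\<Prod>j\<le>k. d j + 1)"
proof -
  have p0: "p > 0" using p prime_gt_0_nat by auto
  have p1: "\<not> p dvd 1" using p by (simp add: prime_nat_iff)
  define L2 where "L2 = {x \<in> {2..<n}. \<not> p dvd (n choose x)}"
  define X where "X = {0, n} \<union> (if d 0 > 0 then {1} else {})"
  have splt: "{2..<n} = Cp n p \<union> L2" "Cp n p \<inter> L2 = {}" by (auto simp: Cp_def L2_def)
  have fL2: "finite L2" unfolding L2_def by simp
  have "n - 2 = card {2..<n}" by simp
  also have "\<dots> = card (Cp n p \<union> L2)" using splt(1) by simp
  also have "\<dots> = card (Cp n p) + card L2" by (rule card_Un_disjoint[OF finite_Cp fL2 splt(2)])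
  finally have cCL: "card (Cp n p) + card L2 = n - 2" by simp
  have cX: "card X = 2 + (if d 0 > 0 then 1 else 0)" using n4 by (simp add: X_def)
  have "L2 \<union> X \<subseteq> Lset p n"
  proof -
    have "L2 \<subseteq> Lset p n" by (auto simp: L2_def Lset_def)
    moreover have "0 \<in> Lset p n" "n \<in> Lset p n" using p1 by (auto simp: Lset_def)
    moreover have "d 0 > 0 \<Longrightarrow> 1 \<in> Lset p n"
    proof -
      assume "d 0 > 0"
      moreover have "n mod p = d 0" unfolding nd by (rule digits_mod[OF p0]) (use dlt in auto)
      ultimately have "\<not> p dvd n" by (auto simp: dvd_eq_mod_eq_0)
      then show "1 \<in> Lset p n" using n4 by (simp add: Lset_def)
    qed
    ultimately show ?thesis by (auto simp: X_def)
  qed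
  moreover have "finite (Lset p n)" by (rule finite_subset[of _ "{..n}"]) (auto simp: Lset_def)
  ultimately have "card (L2 \<union> X) \<le> card (Lset p n)" by (intro card_mono)
  moreover have "card (L2 \<union> X) = card L2 + card X"
  proof (rule card_Un_disjoint[OF fL2])
    show "finite X" by (simp add: X_def)
    show "L2 \<inter> X = {}" by (auto simp: L2_def X_def)
  qed
  moreover have "card (Lset p n) \<le> (\<Prod>j\<le>k. d j + 1)" unfolding nd by (rule Lset_bound[OF p dlt])
  ultimately have le: "card L2 + card X \<le> (\<Prod>j\<le>k. d j + 1)" by linarith
  show ?thesis
  proof (cases "d 0 > 0")
    case True
    then have "card X = 3" using cX by simp
    then show ?thesis using True le cCL n4 by simp
  next
    case False
    then have "card X = 2" using cX by simp
    then show ?thesis using False le cCL n4 by simp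
  qed
qed

theorem corollary5p4:
  fixes p n k :: nat and d :: "nat \<Rightarrow> nat"
  assumes "prime p" and "odd p" and "n \<ge> 4"
    and "\<And>j. j \<le> k \<Longrightarrow> d j < p" and "d k > 0"
    and "n = (\<Sum>j\<le>k. d j * p ^ j)"
  shows "(\<not> (\<forall>j<k. d j = p - 1) \<longrightarrow> (\<forall>i::int. cD p i n = cD p (- i) n))
    \<and> (\<forall>i::int.
         let N = (\<Prod>j\<le>k. d j + 1) in
         (((d 0 > 0 \<and> [i = 0] (mod int p)) \<or> (\<forall>j<k. d j = p - 1))
            \<longrightarrow> 2 ^ (n + 2 - N) dvd cD p i n)
       \<and> ((\<not> ((d 0 > 0 \<and> [i = 0] (mod int p)) \<or> (\<forall>j<k. d j = p - 1))
            \<and> d 0 = 0 \<and> \<not> [i = 0] (mod int p))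
            \<longrightarrow> 2 ^ (n - N) dvd cD p i n)
       \<and> ((\<not> ((d 0 > 0 \<and> [i = 0] (mod int p)) \<or> (\<forall>j<k. d j = p - 1))
            \<and> \<not> (d 0 = 0 \<and> \<not> [i = 0] (mod int p)))
            \<longrightarrow> 2 ^ (n + 1 - N) dvd cD p i n))"
proof -
  have p0: "p > 0" using assms(1) prime_gt_0_nat by auto
  have n2: "2 \<le> n" using assms(3) by simp
  define m where "m = card (Cp n p)"
  define N where "N = (\<Prod>j\<le>k. d j + 1)"
  have bound: "n + (if d 0 > 0 then 1 else 0) \<le> m + N"
    unfolding m_def N_def by (rule Cp_bound[OF assms(1,3,4,6)])
  have ex: "\<exists>x0. x0 \<in> Cp n p" if na: "\<not> (\<forall>j<k. d j = p - 1)"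
  proof -
    obtain x where "2 \<le> x" "x < n" "p dvd (n choose x)"
      using exists_dvd_choose[where p=p and k=k and d=d, OF assms(1,2,4,5)] na assms(6) by auto
    then show ?thesis by (auto simp: Cp_def)
  qed
  have dv1: "2 ^ m dvd cD p i n" if na: "\<not> (\<forall>j<k. d j = p - 1)" for i
  proof -
    obtain x0 where x0: "x0 \<in> Cp n p" using ex[OF na] by blast
    have "2 ^ card (Cp n p) dvd cnt n p i" by (rule cnt_dvd(1)[OF n2 x0])
    then show ?thesis by (simp only: cD_eq m_def)
  qed
  have dv2: "2 ^ Suc m dvd cD p i n" if na: "\<not> (\<forall>j<k. d j = p - 1)" and i0: "[i = 0] (mod int p)" for i
  proof -
    obtain x0 where x0: "x0 \<in> Cp n p" using ex[OF na] by blast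
    have "2 ^ Suc (card (Cp n p)) dvd cnt n p i" by (rule cnt_dvd(2)[OF n2 x0 i0])
    then show ?thesis by (simp only: cD_eq m_def)
  qed
  have dvtr: "2 ^ a dvd c" if "2 ^ b dvd c" "a \<le> b" for a b c :: nat
    using that le_imp_power_dvd dvd_trans by blast
  show ?thesis
    unfolding Let_def N_def[symmetric]
  proof (intro conjI allI impI)
    fix i :: int
    assume na: "\<not> (\<forall>j<k. d j = p - 1)"
    obtain x0 where x0: "x0 \<in> Cp n p" using ex[OF na] by blast
    show "cD p i n = cD p (- i) n" using cnt_sym[OF x0, of i] by (simp only: cD_eq)
  next
    fix i :: int
    assume h: "(0 < d 0 \<and> [i = 0] (mod int p)) \<or> (\<forall>j<k. d j = p - 1)"
    show "2 ^ (n + 2 - N) dvd cD p i n"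
    proof (cases "\<forall>j<k. d j = p - 1")
      case True
      have "n + 1 = N" unfolding N_def assms(6) by (rule all_pm1[OF p0 True])
      then have "n + 2 - N = 1" by simp
      moreover have "2 dvd cnt n p i" by (rule cnt_even[OF n2])
      ultimately show ?thesis by (simp only: cD_eq) simp
    next
      case False
      then have "0 < d 0" "[i = 0] (mod int p)" using h by auto
      then have "n + 2 - N \<le> Suc m" using bound by simp
      then show ?thesis using dv2[OF False \<open>[i = 0] (mod int p)\<close>] dvtr by blast
    qed
  next
    fix i :: int
    assume h: "\<not> ((0 < d 0 \<and> [i = 0] (mod int p)) \<or> (\<forall>j<k. d j = p - 1)) \<and> d 0 = 0 \<and> \<not> [i = 0] (mod int p)"
    then have na: "\<not> (\<forall>j<k. d j = p - 1)" by blast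
    have "n - N \<le> m" using bound h by simp
    then show "2 ^ (n - N) dvd cD p i n" using dv1[OF na] dvtr by blast
  next
    fix i :: int
    assume h: "\<not> ((0 < d 0 \<and> [i = 0] (mod int p)) \<or> (\<forall>j<k. d j = p - 1)) \<and> \<not> (d 0 = 0 \<and> \<not> [i = 0] (mod int p))"
    then have na: "\<not> (\<forall>j<k. d j = p - 1)" by blast
    show "2 ^ (n + 1 - N) dvd cD p i n"
    proof (cases "d 0 = 0")
      case True
      then have i0: "[i = 0] (mod int p)" using h by blast
      have "n + 1 - N \<le> Suc m" using bound True by simp
      then show ?thesis using dv2[OF na i0] dvtr by blast
    next
      case False
      then have "n + 1 - N \<le> m" using bound by simp
      then show ?thesis using dv1[OF na] dvtr by blast
    qed
  qed
qed

end
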